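(* Let $1\le m\le n$ in type $B$ and $1\le m\le n-1$ in types $C$ and $D$. For all $m+1\le i,j\le (m+1)'$, in $\mathrm X(\mathfrak g_N)[[u^{-1}]]$, $$\begin{vmatrix} t_{11}(u)&\dots&t_{1m}(u)&t_{1j}(u)\\ \vdots&&\vdots&\vdots\\ t_{m1}(u)&\dots&t_{mm}(u)&t_{mj}(u)\\ t_{i1}(u)&\dots&t_{im}(u)&\boxed{t_{ij}(u)}\end{vmatrix} = t^{1\dots m}_{1\dots m}(u+m)^{-1}\cdot t^{1\dots m\,i}_{1\dots m\,j}(u+m).$$
   Context: Let $n\ge 1$ and let $\mathfrak g_N$ be one of: $\mathfrak o_N$ with $N=2n+1$ (type $B_n$), $\mathfrak{sp}_N$ with $N=2n$ (type $C_n$), or $\mathfrak o_N$ with $N=2n$ (type $D_n$). For $1\le i\le N$ set $i'=N-i+1$. In the symplectic case put $\varepsilon_i=1$ for $1\le i\le n$ and $\varepsilon_i=-1$ for $n+1\le i\le 2n$. Set $\theta_{ij}=1$ in the orthogonal case and $\theta_{ij}=\varepsilon_i\varepsilon_j$ in the symplectic case, and $\kappa=N/2-1$ in the orthogonal case, $\kappa=N/2+1$ in the symplectic case. Let $e_{ij}$ ($1\le i,j\le N$) be the matrix units of $\mathrm{End}\,\mathbb C^N$, $P=\sum_{i,j}e_{ij}\otimes e_{ji}$, $Q=\sum_{i,j}\theta_{ij}\,e_{ij}\otimes e_{i'j'}$, and $R(u)=1-\frac{P}{u}+\frac{Q}{u-\kappa}$. For $C\in\mathrm{End}\,\mathbb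 C^N\otimes\mathrm{End}\,\mathbb C^N$ and $1\le a<b\le m$, $C_{ab}$ denotes the element of $(\mathrm{End}\,\mathbb C^N)^{\otimes m}$ acting as $C$ on the $a$-th and $b$-th tensor factors and as the identity on the others; for $X=\sum_{i,j} e_{ij}\otimes X_{ij}\in\mathrm{End}\,\mathbb C^N\otimes\mathcal A$, $X_a=\sum_{i,j}1^{\otimes(a-1)}\otimes e_{ij}\otimes 1^{\otimes(m-a)}\otimes X_{ij}$. The extended Yangian $\mathrm X(\mathfrak g_N)$ is the unital associative $\mathbb C$-algebra with generators $t_{ij}^{(r)}$ ($1\le i,j\le N$, $r\ge1$) subject to $R_{12}(u-v)T_1(u)T_2(v)=T_2(v)T_1(u)R_{12}(u-v)$, where $t_{ij}(u)=\delta_{ij}+\sum_{r\ge1}t_{ij}^{(r)}u^{-r}$ and $T(u)=\sum_{i,j}e_{ij}\otimes t_{ij}(u)$ (the relation is read after multiplying both sides by $u-v$ and $u-v-\kappa$, as an identity of formal series). Quantum minors of type $A$: for $a_1,\dots,a_k,b_1,\dots,b_k\in\{1,\dots,N\}$, $t^{a_1\dots a_k}_{b_1\dots b_k}(u)=\sum_{p\in\mathfrak S_k}\mathrm{sgn}\,p\cdot t_{a_{p(1)}b_1}(u)\,t_{a_{p(2)}b_2}(u-1)\cdots t_{a_{p(k)}b_k}(u-k+1)$. Quasideterminants: for a square matrix $A=[a_{ij}]$ over a ring such that the matrix $A^{ij}$ obtained by deleting row $i$ and column $j$ is invertible, $|A|_{ij}=a_{ij}-r_i^{j}(A^{ij})^{-1}c_j^{i}$,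 where $r_i^j$ is the $i$-th row of $A$ with $a_{ij}$ removed and $c_j^i$ is the $j$-th column with $a_{ij}$ removed; it is denoted by writing the matrix with the entry $a_{ij}$ boxed. *)

theory Defs
  imports Complex_Main "HOL-Computational_Algebra.Formal_Power_Series"
    "HOL-Combinatorics.Permutations"
begin

datatype gtype = TB | TC | TD

definition Ndim :: "gtype \<Rightarrow> nat \<Rightarrow> nat" where
  "Ndim g n = (if g = TB then 2*n+1 else 2*n)"

definition orthogonal :: "gtype \<Rightarrow> bool" where
  "orthogonal g = (g \<noteq> TC)"

(* i' = N - i + 1 *)
definition pr :: "nat \<Rightarrow> nat \<Rightarrow> nat" where
  "pr N i = N + 1 - i"

definition epsl :: "nat \<Rightarrow> nat \<Rightarrow> real" where
  "epsl n i = (if i \<le> n then 1 else -1)"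

definition theta :: "gtype \<Rightarrow> nat \<Rightarrow> nat \<Rightarrow> nat \<Rightarrow> real" where
  "theta g n i j = (if orthogonal g then 1 else epsl n i * epsl n j)"

definition kappa :: "gtype \<Rightarrow> nat \<Rightarrow> real" where
  "kappa g n = (if orthogonal g then real (Ndim g n) / 2 - 1 else real (Ndim g n) / 2 + 1)"

text \<open>A family of generators t i j r (r \<ge> 1) in an algebra; the coefficient of u^(-r) in
  t_ij(u) (indexed by an integer, zero for negative exponents).\<close>

definition tc :: "(nat \<Rightarrow> nat \<Rightarrow> nat \<Rightarrow> 'a::ring_1) \<Rightarrow> nat \<Rightarrow> nat \<Rightarrow> int \<Rightarrow> 'a" where
  "tc t i j r = (if r = 0 then (if i = j then 1 else 0)
                 else if r > 0 then t i j (nat r) else 0)"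

text \<open>Polynomials in u, v with real coefficients, given as coefficient functions (p,q)
  for u^p v^q, p,q \<le> 2; they act on two-variable Laurent series F (coefficient F r s of
  u^(-r) v^(-s)) by multiplication.\<close>

definition pD2 :: "real \<Rightarrow> nat \<Rightarrow> nat \<Rightarrow> real" where  (* (u-v)(u-v-\<kappa>) *)
  "pD2 k p q = (if (p,q) = (2,0) then 1 else if (p,q) = (1,1) then -2
               else if (p,q) = (0,2) then 1 else if (p,q) = (1,0) then -k
               else if (p,q) = (0,1) then k else 0)"

definition pD1k :: "real \<Rightarrow> nat \<Rightarrow> nat \<Rightarrow> real" where  (* u-v-\<kappa> *)
  "pD1k k p q = (if (p,q) = (1,0) then 1 else if (p,q) = (0,1) then -1
                else if (p,q) = (0,0) then -k else 0)"

definition pD1 :: "nat \<Rightarrow> nat \<Rightarrow> real" where  (* u-v *)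
  "pD1 p q = (if (p,q) = (1,0) then 1 else if (p,q) = (0,1) then -1 else 0)"

definition polyact :: "(nat \<Rightarrow> nat \<Rightarrow> real) \<Rightarrow> (int \<Rightarrow> int \<Rightarrow> 'a::real_algebra_1) \<Rightarrow> int \<Rightarrow> int \<Rightarrow> 'a" where
  "polyact c F r s = (\<Sum>p\<le>2. \<Sum>q\<le>2. of_real (c p q) * F (r + int p) (s + int q))"

text \<open>Matrix entry ((i,k),(a,c)) of (u-v)(u-v-\<kappa>) R(u-v)
  = (u-v)(u-v-\<kappa>) 1 - (u-v-\<kappa>) P + (u-v) Q, where e_ij \<otimes> e_kl has entry 1
  at ((i,k),(j,l)).\<close>

definition Rpoly :: "gtype \<Rightarrow> nat \<Rightarrow> nat \<Rightarrow> nat \<Rightarrow> nat \<Rightarrow> nat \<Rightarrow> nat \<Rightarrow> nat \<Rightarrow> real" where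
  "Rpoly g n i k a c p q =
     (let N = Ndim g n in
       (if i = a \<and> k = c then pD2 (kappa g n) p q else 0)
     - (if i = c \<and> k = a then pD1k (kappa g n) p q else 0)
     + (if k = pr N i \<and> c = pr N a then theta g n i a * pD1 p q else 0))"

definition RTT :: "gtype \<Rightarrow> nat \<Rightarrow> (nat \<Rightarrow> nat \<Rightarrow> nat \<Rightarrow> 'a::real_algebra_1) \<Rightarrow> bool" where
  "RTT g n t = (let N = Ndim g n in
     \<forall>i\<in>{1..N}. \<forall>k\<in>{1..N}. \<forall>j\<in>{1..N}. \<forall>l\<in>{1..N}. \<forall>r s :: int.
       (\<Sum>a=1..N. \<Sum>c=1..N. polyact (Rpoly g n i k a c) (\<lambda>r s. tc t a j r * tc t c l s) r s)
     = (\<Sum>a=1..N. \<Sum>c=1..N. polyact (Rpoly g n a c j l) (\<lambda>r s. tc t k c s * tc t i a r) r s))"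

text \<open>t_ij(u) as a formal power series in the variable u^(-1).\<close>

definition Tser :: "(nat \<Rightarrow> nat \<Rightarrow> nat \<Rightarrow> 'a::ring_1) \<Rightarrow> nat \<Rightarrow> nat \<Rightarrow> 'a fps" where
  "Tser t i j = Abs_fps (\<lambda>r. tc t i j (int r))"

text \<open>If f = \<Sum>_r f_r u^(-r), then shiftu c f = \<Sum>_r f_r (u+c)^(-r), expanded in u^(-1).\<close>

definition shiftu :: "int \<Rightarrow> 'a::ring_1 fps \<Rightarrow> 'a fps" where
  "shiftu c f = Abs_fps (\<lambda>s. if s = 0 then fps_nth f 0
      else (\<Sum>r=1..s. fps_nth f r * of_int ((-c)^(s-r) * int ((s-1) choose (r-1)))))"

definition qminor :: "(nat \<Rightarrow> nat \<Rightarrow> nat \<Rightarrow> 'a::ring_1) \<Rightarrow> nat list \<Rightarrow> nat list \<Rightarrow> int \<Rightarrow> 'a fps" where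
  "qminor t as bs c = (let k = length bs in
     \<Sum>p\<in>{p. p permutes {0..<k}}.
        of_int (sign p) * prod_list (map (\<lambda>s. shiftu (c - int s) (Tser t (as ! p s) (bs ! s))) [0..<k]))"

definition invertible_el :: "'a::ring_1 \<Rightarrow> bool" where
  "invertible_el x = (\<exists>y. x * y = 1 \<and> y * x = 1)"

definition rinv :: "'a::ring_1 \<Rightarrow> 'a" where
  "rinv x = (THE y. x * y = 1 \<and> y * x = 1)"

text \<open>Matrices are functions M p q with rows indexed by I and columns by J
  (|I| = |J|). An inverse has rows indexed by J and columns by I.\<close>

definition is_mat_inv_on :: "nat set \<Rightarrow> nat set \<Rightarrow> (nat \<Rightarrow> nat \<Rightarrow> 'a::ring_1) \<Rightarrow> (nat \<Rightarrow> nat \<Rightarrow> 'a) \<Rightarrow> bool" where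
  "is_mat_inv_on I J M Ninv =
     ((\<forall>q p. (q \<notin> J \<or> p \<notin> I) \<longrightarrow> Ninv q p = 0)
      \<and> (\<forall>p\<in>I. \<forall>p'\<in>I. (\<Sum>q\<in>J. M p q * Ninv q p') = (if p = p' then 1 else 0))
      \<and> (\<forall>q\<in>J. \<forall>q'\<in>J. (\<Sum>p\<in>I. Ninv q p * M p q') = (if q = q' then 1 else 0)))"

definition mat_invertible_on :: "nat set \<Rightarrow> nat set \<Rightarrow> (nat \<Rightarrow> nat \<Rightarrow> 'a::ring_1) \<Rightarrow> bool" where
  "mat_invertible_on I J M = (\<exists>Ninv. is_mat_inv_on I J M Ninv)"

definition mat_inv_on :: "nat set \<Rightarrow> nat set \<Rightarrow> (nat \<Rightarrow> nat \<Rightarrow> 'a::ring_1) \<Rightarrow> nat \<Rightarrow> nat \<Rightarrow> 'a" where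
  "mat_inv_on I J M = (THE Ninv. is_mat_inv_on I J M Ninv)"

definition quasidet :: "nat set \<Rightarrow> nat set \<Rightarrow> (nat \<Rightarrow> nat \<Rightarrow> 'a::ring_1) \<Rightarrow> nat \<Rightarrow> nat \<Rightarrow> 'a" where
  "quasidet I J M i j = M i j
     - (\<Sum>q\<in>J - {j}. \<Sum>p\<in>I - {i}. M i q * mat_inv_on (I - {i}) (J - {j}) M q p * M p j)"

end

theory Submission
  imports Defs
begin

unbundle fps_syntax


lemma of_real_comm: "of_real r * (x::'a::real_algebra_1) = x * of_real r"
  by (metis mult_scaleR_left mult_scaleR_right mult.left_neutral mult.right_neutral scaleR_conv_of_real)

definition geo :: "int \<Rightarrow> real fps" where
  "geo c = Abs_fps (\<lambda>k. (- of_int c)^k)"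

definition Af :: "int \<Rightarrow> real fps" where
  "Af c = fps_X * geo c"

lemma geo_pow_nth: "(geo c ^ r) $ k = (- of_int c)^k * of_nat ((r + k - 1) choose k)"
proof (induction r arbitrary: k)
  case 0
  then show ?case by (cases k) auto
next
  case (Suc r)
  have "(geo c ^ Suc r) $ k = (\<Sum>i=0..k. (geo c ^ r)$i * (geo c) $ (k-i))"
    by (simp only: power_Suc2 fps_mult_nth)
  also have "\<dots> = (\<Sum>i=0..k. (- of_int c)^k * of_nat ((r + i - 1) choose i))"
  proof (rule sum.cong[OF refl])
    fix i assume i: "i \<in> {0..k}"
    have p: "(-of_int c)^i * (-of_int c)^(k-i) = (- of_int c :: real)^k"
      using i by (simp flip: power_add)
    have "(geo c ^ r) $ i * geo c $ (k - i) = of_nat ((r + i - 1) choose i) * ((-of_int c)^i * (-of_int c)^(k-i))"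
    proof -
      have g1: "geo c $ (k-i) = (-of_int c)^(k-i)" by (simp add: geo_def)
      show ?thesis unfolding g1 Suc.IH by (simp add: ac_simps)
    qed
    also have "\<dots> = (- of_int c)^k * of_nat ((r + i - 1) choose i)" using p by simp
    finally show "(geo c ^ r) $ i * geo c $ (k - i) = (- of_int c)^k * of_nat ((r + i - 1) choose i)" .
  qed
  also have "\<dots> = (- of_int c)^k * of_nat (\<Sum>i=0..k. ((r + i - 1) choose i))"
    by (simp add: sum_distrib_left)
  also have "(\<Sum>i=0..k. ((r + i - 1) choose i)) = (Suc r + k - 1) choose k"
  proof (cases r)
    case 0
    have "(\<Sum>i=0..k. ((r + i - 1) choose i)) = (\<Sum>i=0..k. (if i = 0 then 1 else 0))"
      using 0 by (intro sum.cong) (auto simp: binomial_eq_0)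
    also have "\<dots> = 1" by simp
    finally show ?thesis using 0 by simp
  next
    case (Suc r')
    then show ?thesis using sum_choose_lower[of r' k] by (simp add: atLeast0AtMost)
  qed
  finally show ?case .
qed

definition bet :: "int \<Rightarrow> nat \<Rightarrow> nat \<Rightarrow> real" where
  "bet c a r = (Af c ^ r) $ a"

lemma bet_eq: "bet c a r = (if r \<le> a then (- of_int c)^(a-r) * of_nat ((a - 1) choose (a - r)) else 0)"
proof -
  have "Af c ^ r = fps_X ^ r * geo c ^ r" by (simp add: Af_def power_mult_distrib)
  then show ?thesis
    by (auto simp: bet_def fps_X_power_mult_nth geo_pow_nth)
qed

lemma bet_zero: "a < r \<Longrightarrow> bet c a r = 0" by (simp add: bet_eq)

lemma shiftu_nth: "shiftu c f $ a = (\<Sum>r\<le>a. of_real (bet c a r) * f $ r)"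
proof (cases "a = 0")
  case True then show ?thesis by (simp add: shiftu_def bet_def)
next
  case False
  have "(\<Sum>r\<le>a. of_real (bet c a r) * f $ r) = (\<Sum>r\<in>{1..a}. of_real (bet c a r) * f $ r)"
  proof -
    have e: "{..a} = insert 0 {1..a}" by auto
    have "bet c a 0 = 0" using False by (simp add: bet_eq binomial_eq_0)
    then show ?thesis by (simp add: e)
  qed
  also have "\<dots> = (\<Sum>r=1..a. f $ r * of_int ((-c)^(a-r) * int ((a-1) choose (r-1))))"
  proof (rule sum.cong[OF refl])
    fix r assume r: "r \<in> {1..a}"
    have "(a - 1) choose (a - r) = (a-1) choose (r-1)"
    proof -
      have "a - 1 - (r - 1) = a - r" using r by auto
      then show ?thesis using binomial_symmetric[of "r-1" "a-1"] r by auto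
    qed
    then have hb: "bet c a r = of_int ((-c)^(a-r) * int ((a-1) choose (r-1)))"
      using r by (simp only: bet_eq) simp
    show "of_real (bet c a r) * f $ r = f $ r * of_int ((-c)^(a-r) * int ((a-1) choose (r-1)))"
      by (simp only: hb of_real_of_int_eq) (rule mult_of_int_commute)
  qed
  also have "\<dots> = shiftu c f $ a"
  proof -
    have "shiftu c f $ a = (if a = 0 then f $ 0 else (\<Sum>r=1..a. f $ r * of_int ((-c)^(a-r) * int ((a-1) choose (r-1)))))"
      unfolding shiftu_def by (rule fps_nth_Abs_fps)
    then show ?thesis using False by (simp only: if_False simp_thms)
  qed
  finally show ?thesis by (rule sym)
qed


lemma geo_mult: "geo c * (1 + fps_const (of_int c) * fps_X) = 1"
proof (rule fps_ext)
  fix n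
  show "(geo c * (1 + fps_const (of_int c) * fps_X)) $ n = 1 $ n"
  proof (cases n)
    case 0 then show ?thesis by (simp add: geo_def)
  next
    case (Suc m)
    have "geo c * (1 + fps_const (of_int c) * fps_X) = geo c + fps_const (of_int c) * (fps_X * geo c)"
      by (simp add: algebra_simps)
    then show ?thesis using Suc by (simp add: geo_def)
  qed
qed

lemma Af_mult: "Af c * (1 + fps_const (of_int c) * fps_X) = fps_X"
  using geo_mult[of c] unfolding Af_def by (simp add: mult.assoc)

lemma Af_diff: assumes "c - d = 1" shows "Af d - Af c = Af c * Af d"
proof -
  let ?U = "(1 + fps_const (of_int c) * fps_X) * (1 + fps_const (of_int d) * (fps_X :: real fps))"
  have U0: "?U \<noteq> 0"
  proof
    assume "?U = 0" then have "?U $ 0 = 0" by (simp only: fps_zero_nth)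
    moreover have "?U $ 0 = 1" by simp
    ultimately show False by simp
  qed
  have "(Af d - Af c) * ?U = (Af d * (1 + fps_const (of_int d) * fps_X)) * (1 + fps_const (of_int c) * fps_X)
     - (Af c * (1 + fps_const (of_int c) * fps_X)) * (1 + fps_const (of_int d) * fps_X)"
    by (simp only: mult_ac left_diff_distrib)
  also have "\<dots> = fps_X * (1 + fps_const (of_int c) * fps_X) - fps_X * (1 + fps_const (of_int d) * fps_X)"
    unfolding Af_mult ..
  
  also have "\<dots> = fps_X * fps_X"
  proof -
    have "fps_const (real_of_int c) = fps_const (of_int d) + 1" using assms
      by (metis add.commute diff_eq_eq fps_const_1_eq_1 fps_const_add of_int_add of_int_1)
    then show ?thesis by (simp add: algebra_simps)
  qed
  also have "\<dots> = (Af c * (1 + fps_const (of_int c) * fps_X)) * (Af d * (1 + fps_const (of_int d) * fps_X))"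
    unfolding Af_mult ..
  also have "\<dots> = (Af c * Af d) * ?U" by (simp only: mult_ac)
  finally show ?thesis using U0 by simp
qed

definition gam :: "int \<Rightarrow> int \<Rightarrow> nat \<Rightarrow> nat \<Rightarrow> nat \<Rightarrow> real" where
  "gam c d N r s = (Af c ^ r * Af d ^ s) $ N"

lemma gam_sum: "gam c d N r s = (\<Sum>a\<le>N. bet c a r * bet d (N - a) s)"
  by (simp add: gam_def fps_mult_nth bet_def atLeast0AtMost)

lemma gam_zero: assumes "N < r + s" shows "gam c d N r s = 0"
  unfolding gam_sum
proof (intro sum.neutral ballI)
  fix x assume xN: "x \<in> {..N}"
  show "bet c x r * bet d (N - x) s = 0"
  proof (cases "x < r")
    case True then show ?thesis by (simp add: bet_zero)
  next
    case False then have "N - x < s" using assms xN by auto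
    then show ?thesis by (simp add: bet_zero)
  qed
qed

lemma gam_rec: assumes "c - d = 1"
  shows "gam c d N r (Suc s) - gam c d N (Suc r) s = gam c d N (Suc r) (Suc s)"
proof -
  have "Af c ^ r * Af d ^ Suc s - Af c ^ Suc r * Af d ^ s = Af c ^ r * Af d ^ s * (Af d - Af c)"
    by (simp add: algebra_simps)
  also have "\<dots> = Af c ^ Suc r * Af d ^ Suc s" using Af_diff[OF assms] by (simp add: ac_simps)
  finally show ?thesis unfolding gam_def by (metis fps_sub_nth)
qed

lemma shiftu_nth_ext: "a \<le> K \<Longrightarrow> shiftu c f $ a = (\<Sum>r\<le>K. of_real (bet c a r) * f $ r)"
  unfolding shiftu_nth by (intro sum.mono_neutral_left) (auto simp: bet_zero)

definition Ev :: "int \<Rightarrow> int \<Rightarrow> (nat \<Rightarrow> nat \<Rightarrow> 'a::real_algebra_1) \<Rightarrow> nat \<Rightarrow> 'a" where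
  "Ev c d F N = (\<Sum>r\<le>N. \<Sum>s\<le>N. of_real (gam c d N r s) * F r s)"

lemma Ev_prod_gen:
  fixes f g :: "'a::real_algebra_1 fps"
  shows "(\<Sum>r\<le>N. \<Sum>s\<le>N. of_real ((Af c ^ r * Af d ^ s) $ N) * (f $ r * g $ s)) = (shiftu c f * shiftu d g) $ N"
proof -
  have "(shiftu c f * shiftu d g) $ N = (\<Sum>a\<le>N. shiftu c f $ a * shiftu d g $ (N - a))"
    by (simp add: fps_mult_nth atLeast0AtMost)
  also have "\<dots> = (\<Sum>a\<le>N. (\<Sum>r\<le>N. of_real (bet c a r) * f $ r) * (\<Sum>s\<le>N. of_real (bet d (N-a) s) * g $ s))"
    by (intro sum.cong refl arg_cong2[where f="(*)"] shiftu_nth_ext) auto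
  also have "\<dots> = (\<Sum>a\<le>N. \<Sum>r\<le>N. \<Sum>s\<le>N. of_real (bet c a r * bet d (N-a) s) * (f $ r * g $ s))"
  proof (rule sum.cong[OF refl])
    fix a
    show "(\<Sum>r\<le>N. of_real (bet c a r) * f $ r) * (\<Sum>s\<le>N. of_real (bet d (N-a) s) * g $ s)
      = (\<Sum>r\<le>N. \<Sum>s\<le>N. of_real (bet c a r * bet d (N-a) s) * (f $ r * g $ s))"
      unfolding sum_product
    proof (rule sum.cong[OF refl], rule sum.cong[OF refl])
      fix r s
      have "of_real (bet c a r) * f $ r * (of_real (bet d (N - a) s) * g $ s)
          = of_real (bet c a r) * (f $ r * of_real (bet d (N - a) s)) * g $ s" by (simp add: mult.assoc)
      also have "\<dots> = of_real (bet c a r) * (of_real (bet d (N - a) s) * f $ r) * g $ s"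
        by (simp add: of_real_comm)
      also have "\<dots> = of_real (bet c a r * bet d (N - a) s) * (f $ r * g $ s)"
        by (simp add: mult.assoc)
      finally show "of_real (bet c a r) * f $ r * (of_real (bet d (N - a) s) * g $ s)
          = of_real (bet c a r * bet d (N - a) s) * (f $ r * g $ s)" .
    qed
  qed
  also have "\<dots> = (\<Sum>r\<le>N. \<Sum>s\<le>N. \<Sum>a\<le>N. of_real (bet c a r * bet d (N-a) s) * (f $ r * g $ s))"
    by (rule trans[OF sum.swap], rule sum.cong[OF refl], rule sum.swap)
  also have "\<dots> = (\<Sum>r\<le>N. \<Sum>s\<le>N. of_real ((Af c ^ r * Af d ^ s) $ N) * (f $ r * g $ s))"
  proof (rule sum.cong[OF refl], rule sum.cong[OF refl])
    fix r s
    show "(\<Sum>a\<le>N. of_real (bet c a r * bet d (N-a) s) * (f $ r * g $ s)) = of_real ((Af c ^ r * Af d ^ s) $ N) * (f $ r * g $ s)"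
      unfolding sum_distrib_right[symmetric] of_real_sum[symmetric]
      using gam_sum[of c d N r s] by (simp add: gam_def)
  qed
  finally show ?thesis by simp
qed

lemma Ev_prod: "Ev c d (\<lambda>r s. f $ r * g $ s) N = (shiftu c f * shiftu d g) $ N"
  unfolding Ev_def gam_def by (rule Ev_prod_gen)

lemma Ev_prod2: "Ev c d (\<lambda>r s. g $ s * f $ r) N = (shiftu d g * shiftu c f) $ N"
proof -
  have "Ev c d (\<lambda>r s. g $ s * f $ r) N = (\<Sum>s\<le>N. \<Sum>r\<le>N. of_real ((Af d ^ s * Af c ^ r) $ N) * (g $ s * f $ r))"
    unfolding Ev_def gam_def
    by (rule trans[OF sum.swap], rule sum.cong[OF refl], rule sum.cong[OF refl], simp only: mult.commute)
  also have "\<dots> = (shiftu d g * shiftu c f) $ N" by (rule Ev_prod_gen)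
  finally show ?thesis .
qed

lemma Ev_diff: "Ev c d (\<lambda>r s. F r s - G r s) N = Ev c d F N - Ev c d G N"
  unfolding Ev_def by (simp add: right_diff_distrib sum_subtractf)

lemma Ev_shift:
  fixes F :: "nat \<Rightarrow> nat \<Rightarrow> 'a::real_algebra_1"
  assumes cd: "c - d = 1" and F0: "\<And>s. F 0 s = 0" and F0': "\<And>r. F r 0 = 0"
  shows "Ev c d (\<lambda>r s. F (Suc r) s - F r (Suc s)) N = Ev c d F N"
proof (cases N)
  case 0 then show ?thesis by (simp add: Ev_def F0 F0')
next
  case (Suc M)
  let ?g = "gam c d N"
  have R: "Ev c d F N = (\<Sum>r\<le>M. \<Sum>s\<le>M. of_real (?g (Suc r) (Suc s)) * F (Suc r) (Suc s))"
    unfolding Ev_def Suc sum.atMost_Suc_shift by (simp add: F0 F0')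
  have A: "(\<Sum>r\<le>N. \<Sum>s\<le>N. of_real (?g r s) * F (Suc r) s)
      = (\<Sum>r\<le>M. \<Sum>s\<le>M. of_real (?g r (Suc s)) * F (Suc r) (Suc s))"
  proof -
    have "(\<Sum>r\<le>N. \<Sum>s\<le>N. of_real (?g r s) * F (Suc r) s)
        = (\<Sum>r\<le>N. \<Sum>s\<le>M. of_real (?g r (Suc s)) * F (Suc r) (Suc s))"
      unfolding Suc sum.atMost_Suc_shift[of _ M] by (simp add: F0')
    also have "\<dots> = (\<Sum>r\<le>M. \<Sum>s\<le>M. of_real (?g r (Suc s)) * F (Suc r) (Suc s))"
      unfolding Suc sum.atMost_Suc[of _ M] using gam_zero[of "Suc M" "Suc M"] Suc by simp
    finally show ?thesis .
  qed
  have B: "(\<Sum>r\<le>N. \<Sum>s\<le>N. of_real (?g r s) * F r (Suc s))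
      = (\<Sum>r\<le>M. \<Sum>s\<le>M. of_real (?g (Suc r) s) * F (Suc r) (Suc s))"
  proof -
    have "(\<Sum>r\<le>N. \<Sum>s\<le>N. of_real (?g r s) * F r (Suc s))
        = (\<Sum>r\<le>M. \<Sum>s\<le>N. of_real (?g (Suc r) s) * F (Suc r) (Suc s))"
      unfolding Suc sum.atMost_Suc_shift[of _ M] by (simp add: F0)
    also have "\<dots> = (\<Sum>r\<le>M. \<Sum>s\<le>M. of_real (?g (Suc r) s) * F (Suc r) (Suc s))"
      unfolding Suc sum.atMost_Suc[of _ M] using gam_zero[of "Suc M" "Suc _" "Suc M"] Suc by simp
    finally show ?thesis .
  qed
  have "Ev c d (\<lambda>r s. F (Suc r) s - F r (Suc s)) N
      = (\<Sum>r\<le>N. \<Sum>s\<le>N. of_real (?g r s) * F (Suc r) s) - (\<Sum>r\<le>N. \<Sum>s\<le>N. of_real (?g r s) * F r (Suc s))"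
    unfolding Ev_def by (simp add: right_diff_distrib sum_subtractf)
  also have "\<dots> = (\<Sum>r\<le>M. \<Sum>s\<le>M. of_real (?g r (Suc s) - ?g (Suc r) s) * F (Suc r) (Suc s))"
    unfolding A B by (simp add: left_diff_distrib sum_subtractf)
  also have "\<dots> = Ev c d F N" unfolding R gam_rec[OF cd] ..
  finally show ?thesis .
qed


lemma sum3: "(\<Sum>p\<le>(2::nat). f p) = f 0 + f 1 + f 2"
  by (simp add: numeral_2_eq_2 atMost_Suc add_ac)

lemma polyact_pD2: "polyact (pD2 k) F r s = F (r+2) s - 2 * F (r+1) (s+1) + F r (s+2)
   - of_real k * F (r+1) s + of_real k * F r (s+1)"
  unfolding polyact_def sum3 by (simp add: pD2_def algebra_simps)

lemma polyact_pD1k: "polyact (pD1k k) F r s = F (r+1) s - F r (s+1) - of_real k * F r s"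
  unfolding polyact_def sum3 by (simp add: pD1k_def algebra_simps)

lemma polyact_diffc: "polyact (\<lambda>p q. x p q - y p q) F r s = polyact x F r s - polyact y F r s"
  unfolding polyact_def by (simp only: of_real_diff left_diff_distrib sum_subtractf)

lemma polyact_ifc: "polyact (\<lambda>p q. if P then x p q else 0) F r s = (if P then polyact x F r s else 0)"
  unfolding polyact_def by simp

lemma Rpoly_noQ: assumes "k \<noteq> pr (Ndim g n) i" shows "Rpoly g n i k a c =
  (\<lambda>p q. (if i = a \<and> k = c then pD2 (kappa g n) p q else 0) - (if i = c \<and> k = a then pD1k (kappa g n) p q else 0))"
proof (intro ext)
  fix p q show "Rpoly g n i k a c p q = (if i = a \<and> k = c then pD2 (kappa g n) p q else 0) - (if i = c \<and> k = a then pD1k (kappa g n) p q else 0)"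
    unfolding Rpoly_def Let_def using assms by simp
qed

lemma dsum_delta:
  assumes "finite S" "a0 \<in> S" "c0 \<in> S"
  shows "(\<Sum>a\<in>S. \<Sum>c\<in>S. (if a0 = a \<and> c0 = c then (X a c :: 'b::ab_group_add) else 0)) = X a0 c0"
proof -
  have "\<And>a. (\<Sum>c\<in>S. (if a0 = a \<and> c0 = c then X a c else 0)) = (if a0 = a then X a c0 else 0)"
  proof -
    fix a show "(\<Sum>c\<in>S. (if a0 = a \<and> c0 = c then X a c else 0)) = (if a0 = a then X a c0 else 0)"
      using assms by (cases "a0 = a") (simp_all add: sum.delta)
  qed
  then show ?thesis using assms by (simp add: sum.delta)
qed

lemma dsum_delta2:
  assumes "finite S" "a0 \<in> S" "c0 \<in> S"
  shows "(\<Sum>a\<in>S. \<Sum>c\<in>S. (if a = a0 \<and> c = c0 then (X a c :: 'b::ab_group_add) else 0)) = X a0 c0"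
  using dsum_delta[OF assms, of X] by (simp add: eq_commute)

lemma grp4: assumes "(h::'b::ab_group_add) = a - c" "k = b - d" "a - b = c - d" shows "h - k = 0"
proof -
  have "h - k = (a - b) - (c - d)" unfolding assms(1,2) by (simp add: algebra_simps)
  also have "\<dots> = 0" using assms(3) by simp
  finally show ?thesis .
qed

lemma tc_neg: "r < 0 \<Longrightarrow> tc t a b r = 0" by (simp add: tc_def)
lemma tc_0_comm: "tc t a b 0 * x = x * tc t a b 0" by (simp add: tc_def)

context
  fixes g :: gtype and n :: nat and t :: "nat \<Rightarrow> nat \<Rightarrow> nat \<Rightarrow> 'a::real_algebra_1" and i j k l :: nat
begin

definition "HH r s = tc t i j r * tc t k l s - tc t k l s * tc t i j r"
definition "KK r s = tc t k j r * tc t i l s - tc t k j s * tc t i l r"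
definition "ZZ r s = HH (r+1) s - HH r (s+1) - KK r s"

lemma HH_zero: "x \<le> 0 \<or> y \<le> 0 \<Longrightarrow> HH x y = 0"
  unfolding HH_def
  by (metis (no_types, opaque_lifting) diff_self le_less mult_zero_left mult_zero_right tc_0_comm tc_neg)

lemma KK_zero: "x < 0 \<or> y < 0 \<Longrightarrow> KK x y = 0"
  unfolding KK_def by (auto simp: tc_neg)

lemma ZZ_zero: "r < 0 \<or> s < 0 \<Longrightarrow> ZZ r s = 0"
  unfolding ZZ_def using HH_zero KK_zero by (auto)

lemma act_identity:
  "polyact (pD2 kk) HH r s - polyact (pD1k kk) KK r s = ZZ (r+1) s - ZZ r (s+1) - of_real kk * ZZ r s"
proof -
  have e1: "r + 1 + 1 = r + 2" "s + 1 + 1 = s + 2" by simp_all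
  show ?thesis unfolding polyact_pD2 polyact_pD1k ZZ_def e1
    by (simp add: algebra_simps mult_2)
qed

lemma rtt_rel:
  assumes rtt: "RTT g n t"
    and idx: "i \<in> {1..Ndim g n}" "j \<in> {1..Ndim g n}" "k \<in> {1..Ndim g n}" "l \<in> {1..Ndim g n}"
    and nk: "k \<noteq> pr (Ndim g n) i" and nl: "l \<noteq> pr (Ndim g n) j"
  shows "HH (r+1) s - HH r (s+1) = KK r s"
proof -
  let ?N = "Ndim g n" and ?k = "kappa g n"
  have main: "polyact (pD2 ?k) HH r s - polyact (pD1k ?k) KK r s = 0" for r s
  proof -
    have eq: "(\<Sum>a=1..?N. \<Sum>c=1..?N. polyact (Rpoly g n i k a c) (\<lambda>r s. tc t a j r * tc t c l s) r s)
     = (\<Sum>a=1..?N. \<Sum>c=1..?N. polyact (Rpoly g n a c j l) (\<lambda>r s. tc t k c s * tc t i a r) r s)"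
      using rtt idx unfolding RTT_def Let_def by blast
    have L: "(\<Sum>a=1..?N. \<Sum>c=1..?N. polyact (Rpoly g n i k a c) (\<lambda>r s. tc t a j r * tc t c l s) r s)
      = polyact (pD2 ?k) (\<lambda>r s. tc t i j r * tc t k l s) r s - polyact (pD1k ?k) (\<lambda>r s. tc t k j r * tc t i l s) r s"
    proof -
      have "(\<Sum>a=1..?N. \<Sum>c=1..?N. polyact (Rpoly g n i k a c) (\<lambda>r s. tc t a j r * tc t c l s) r s)
        = (\<Sum>a=1..?N. \<Sum>c=1..?N. (if i = a \<and> k = c then polyact (pD2 ?k) (\<lambda>r s. tc t a j r * tc t c l s) r s else 0)
              - (if k = a \<and> i = c then polyact (pD1k ?k) (\<lambda>r s. tc t a j r * tc t c l s) r s else 0))"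
        unfolding Rpoly_noQ[OF nk] polyact_diffc polyact_ifc by (simp only: conj_commute)
      also have "\<dots> = (\<Sum>a=1..?N. \<Sum>c=1..?N. (if i = a \<and> k = c then polyact (pD2 ?k) (\<lambda>r s. tc t a j r * tc t c l s) r s else 0))
            - (\<Sum>a=1..?N. \<Sum>c=1..?N. (if k = a \<and> i = c then polyact (pD1k ?k) (\<lambda>r s. tc t a j r * tc t c l s) r s else 0))"
        by (simp only: sum_subtractf)
      also have "\<dots> = polyact (pD2 ?k) (\<lambda>r s. tc t i j r * tc t k l s) r s - polyact (pD1k ?k) (\<lambda>r s. tc t k j r * tc t i l s) r s"
        using idx by (simp only: dsum_delta[OF finite_atLeastAtMost])
      finally show ?thesis .
    qed
    have nl': "pr ?N j \<noteq> l" using nl by auto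
    have R: "(\<Sum>a=1..?N. \<Sum>c=1..?N. polyact (Rpoly g n a c j l) (\<lambda>r s. tc t k c s * tc t i a r) r s)
      = polyact (pD2 ?k) (\<lambda>r s. tc t k l s * tc t i j r) r s - polyact (pD1k ?k) (\<lambda>r s. tc t k j s * tc t i l r) r s"
    proof -
      have rp: "Rpoly g n a c j l = (\<lambda>p q. (if a = j \<and> c = l then pD2 ?k p q else 0) - (if a = l \<and> c = j then pD1k ?k p q else 0))" for a c
      proof (intro ext)
        fix p q show "Rpoly g n a c j l p q = (if a = j \<and> c = l then pD2 ?k p q else 0) - (if a = l \<and> c = j then pD1k ?k p q else 0)"
          unfolding Rpoly_def Let_def using nl by simp
      qed
      have "(\<Sum>a=1..?N. \<Sum>c=1..?N. polyact (Rpoly g n a c j l) (\<lambda>r s. tc t k c s * tc t i a r) r s)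
        = (\<Sum>a=1..?N. \<Sum>c=1..?N. (if a = j \<and> c = l then polyact (pD2 ?k) (\<lambda>r s. tc t k c s * tc t i a r) r s else 0)
              - (if a = l \<and> c = j then polyact (pD1k ?k) (\<lambda>r s. tc t k c s * tc t i a r) r s else 0))"
        unfolding rp polyact_diffc polyact_ifc ..
      also have "\<dots> = (\<Sum>a=1..?N. \<Sum>c=1..?N. (if a = j \<and> c = l then polyact (pD2 ?k) (\<lambda>r s. tc t k c s * tc t i a r) r s else 0))
            - (\<Sum>a=1..?N. \<Sum>c=1..?N. (if a = l \<and> c = j then polyact (pD1k ?k) (\<lambda>r s. tc t k c s * tc t i a r) r s else 0))"
        by (simp only: sum_subtractf)
      also have "\<dots> = polyact (pD2 ?k) (\<lambda>r s. tc t k l s * tc t i j r) r s - polyact (pD1k ?k) (\<lambda>r s. tc t k j s * tc t i l r) r s"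
        using idx by (simp only: dsum_delta2[OF finite_atLeastAtMost])
      finally show ?thesis .
    qed
    have lin: "polyact c (\<lambda>r s. F r s - G r s) r s = polyact c F r s - polyact c G r s" for c F G
      unfolding polyact_def by (simp only: right_diff_distrib sum_subtractf)
    have "polyact (pD2 ?k) HH r s = polyact (pD2 ?k) (\<lambda>r s. tc t i j r * tc t k l s) r s - polyact (pD2 ?k) (\<lambda>r s. tc t k l s * tc t i j r) r s"
      unfolding HH_def[abs_def] by (rule lin)
    moreover have "polyact (pD1k ?k) KK r s = polyact (pD1k ?k) (\<lambda>r s. tc t k j r * tc t i l s) r s - polyact (pD1k ?k) (\<lambda>r s. tc t k j s * tc t i l r) r s"
      unfolding KK_def[abs_def] by (rule lin)
    moreover have "polyact (pD2 ?k) (\<lambda>r s. tc t i j r * tc t k l s) r s - polyact (pD1k ?k) (\<lambda>r s. tc t k j r * tc t i l s) r s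
       = polyact (pD2 ?k) (\<lambda>r s. tc t k l s * tc t i j r) r s - polyact (pD1k ?k) (\<lambda>r s. tc t k j s * tc t i l r) r s"
      using eq unfolding L R .
    ultimately show ?thesis by (rule grp4)
  qed
  have rec: "ZZ (r+1) s = ZZ r (s+1) + of_real ?k * ZZ r s" for r s
    using main[of r s] act_identity[of ?k r s] by (simp add: algebra_simps)
  have ind: "\<forall>s. ZZ (int m - 1) s = 0" for m
  proof (induction m)
    case 0 then show ?case using ZZ_zero by simp
  next
    case (Suc m)
    show ?case
    proof
      fix s
      have "ZZ (int (Suc m) - 1) s = ZZ ((int m - 1) + 1) s" by simp
      also have "\<dots> = 0" unfolding rec using Suc by simp
      finally show "ZZ (int (Suc m) - 1) s = 0" .
    qed
  qed
  have "ZZ r s = 0"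
  proof (cases "r < 0")
    case True then show ?thesis using ZZ_zero by simp
  next
    case False
    then have "r = int (nat (r + 1)) - 1" by simp
    then show ?thesis using ind by metis
  qed
  then show ?thesis unfolding ZZ_def by (simp add: algebra_simps)
qed

end

lemma Tser_nth: "Tser t a b $ r = tc t a b (int r)"
  by (simp add: Tser_def)

lemma rtt_fps:
  assumes rtt: "RTT g n t"
    and idx: "i \<in> {1..Ndim g n}" "j \<in> {1..Ndim g n}" "k \<in> {1..Ndim g n}" "l \<in> {1..Ndim g n}"
    and nk: "k \<noteq> pr (Ndim g n) i" and nl: "l \<noteq> pr (Ndim g n) j"
  shows "shiftu w (Tser t i j) * shiftu (w-1) (Tser t k l) - shiftu (w-1) (Tser t k l) * shiftu w (Tser t i j)
       = shiftu w (Tser t k j) * shiftu (w-1) (Tser t i l) - shiftu (w-1) (Tser t k j) * shiftu w (Tser t i l)"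
proof (rule fps_ext)
  fix N
  define F where "F r s = Tser t i j $ r * Tser t k l $ s - Tser t k l $ s * Tser t i j $ r" for r s
  have F0: "F 0 s = 0" for s unfolding F_def Tser_nth using tc_0_comm by (metis diff_self of_nat_0)
  have F0': "F r 0 = 0" for r unfolding F_def Tser_nth using tc_0_comm by (metis diff_self of_nat_0)
  have FK: "F (Suc r) s - F r (Suc s) = Tser t k j $ r * Tser t i l $ s - Tser t k j $ s * Tser t i l $ r" for r s
    using rtt_rel[OF rtt idx nk nl, of "int r" "int s"]
    unfolding F_def Tser_nth HH_def KK_def by (simp add: add.commute)
  have cd: "w - (w - 1) = 1" by simp
  have "(shiftu w (Tser t i j) * shiftu (w-1) (Tser t k l) - shiftu (w-1) (Tser t k l) * shiftu w (Tser t i j)) $ N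
      = Ev w (w-1) F N"
    unfolding F_def Ev_diff Ev_prod Ev_prod2 by simp
  also have "\<dots> = Ev w (w-1) (\<lambda>r s. F (Suc r) s - F r (Suc s)) N"
    by (rule Ev_shift[of w "w-1" F, OF cd F0 F0', symmetric])
  also have "\<dots> = Ev w (w-1) (\<lambda>r s. Tser t k j $ r * Tser t i l $ s - Tser t k j $ s * Tser t i l $ r) N"
    unfolding FK ..
  also have "\<dots> = (shiftu w (Tser t k j) * shiftu (w-1) (Tser t i l) - shiftu (w-1) (Tser t k j) * shiftu w (Tser t i l)) $ N"
    unfolding Ev_diff Ev_prod Ev_prod2 by simp
  finally show "(shiftu w (Tser t i j) * shiftu (w-1) (Tser t k l) - shiftu (w-1) (Tser t k l) * shiftu w (Tser t i j)) $ N
       = (shiftu w (Tser t k j) * shiftu (w-1) (Tser t i l) - shiftu (w-1) (Tser t k j) * shiftu w (Tser t i l)) $ N" .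
qed


definition gmin :: "(nat \<Rightarrow> nat \<Rightarrow> nat \<Rightarrow> 'a::real_algebra_1) \<Rightarrow> (nat \<Rightarrow> nat) \<Rightarrow> (nat \<Rightarrow> nat) \<Rightarrow> nat \<Rightarrow> int \<Rightarrow> 'a fps" where
  "gmin t af bf k c = (\<Sum>p\<in>{p. p permutes {0..<k}}.
      of_int (sign p) * prod_list (map (\<lambda>s. shiftu (c - int s) (Tser t (af (p s)) (bf s))) [0..<k]))"

lemma qminor_gmin: "qminor t as bs c = gmin t (nth as) (nth bs) (length bs) c"
  by (simp add: qminor_def gmin_def Let_def)

definition symcond :: "(nat \<Rightarrow> nat \<Rightarrow> nat \<Rightarrow> 'a::real_algebra_1) \<Rightarrow> nat set \<Rightarrow> nat set \<Rightarrow> bool" where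
  "symcond t Rs Cs = (\<forall>x\<in>Rs. \<forall>y\<in>Rs. \<forall>b1\<in>Cs. \<forall>b2\<in>Cs. \<forall>w.
     shiftu w (Tser t x b1) * shiftu (w-1) (Tser t y b2) + shiftu w (Tser t x b2) * shiftu (w-1) (Tser t y b1)
   = shiftu w (Tser t y b1) * shiftu (w-1) (Tser t x b2) + shiftu w (Tser t y b2) * shiftu (w-1) (Tser t x b1))"

lemma self_neg_zero: assumes "(S::'a::real_algebra_1 fps) = - S" shows "S = 0"
proof (rule fps_ext)
  fix n
  have e: "S $ n = - (S $ n)" using arg_cong[OF assms, of "\<lambda>f. f $ n"] by simp
  have "S $ n + S $ n = S $ n + - (S $ n)" by (subst e[symmetric]) (rule refl)
  then have "S $ n + S $ n = 0" by simp
  then have "scaleR 2 (S $ n) = 0" by (simp add: scaleR_2)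
  then show "S $ n = 0 $ n" by simp
qed

lemma upt_split3: "Suc s < k \<Longrightarrow> [0..<k] = [0..<s] @ [s, Suc s] @ [Suc (Suc s)..<k]"
proof -
  assume a: "Suc s < k"
  have "[0..<k] = [0..<s] @ [s..<k]" using upt_add_eq_append[of 0 s "k - s"] a by simp
  moreover have "[s..<k] = s # Suc s # [Suc (Suc s)..<k]" using a by (simp add: upt_conv_Cons)
  ultimately show ?thesis by simp
qed

lemma prod_split3:
  assumes "Suc s < k"
  shows "prod_list (map f [0..<k]) = prod_list (map f [0..<s]) * f s * f (Suc s) * prod_list (map f [Suc (Suc s)..<k])"
  unfolding upt_split3[OF assms] by (simp add: mult.assoc)

lemma gmin_swap:
  fixes t :: "nat \<Rightarrow> nat \<Rightarrow> nat \<Rightarrow> 'a::real_algebra_1"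
  assumes sk: "Suc s < k"
    and sc: "symcond t (af ` {0..<k}) Cs" and b1: "bf s \<in> Cs" and b2: "bf (Suc s) \<in> Cs"
  shows "gmin t af (bf \<circ> Transposition.transpose s (Suc s)) k c = - gmin t af bf k c"
proof -
  define \<tau> where "\<tau> = Transposition.transpose s (Suc s)"
  define P where "P = {p. p permutes {0..<k}}"
  define h where "h p bf' q = shiftu (c - int q) (Tser t (af (p q)) (bf' q))" for p bf' q
  define pre where "pre p = prod_list (map (h p bf) [0..<s])" for p
  define suf where "suf p = prod_list (map (h p bf) [Suc (Suc s)..<k])" for p
  define X where "X a b = shiftu (c - int s) (Tser t a b)" for a b
  define Y where "Y a b = shiftu (c - int s - 1) (Tser t a b)" for a b
  define G where "G x y = X x (bf s) * Y y (bf (Suc s)) + X x (bf (Suc s)) * Y y (bf s)" for x y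
  have hS: "h p bf' (Suc s) = Y (af (p (Suc s))) (bf' (Suc s))" for p bf'
    by (simp add: h_def Y_def algebra_simps)
  have hs: "h p bf' s = X (af (p s)) (bf' s)" for p bf' by (simp add: h_def X_def)
  have pre_bf: "prod_list (map (h p (bf \<circ> \<tau>)) [0..<s]) = pre p" for p
    unfolding pre_def by (rule arg_cong[where f=prod_list], rule map_cong) (auto simp: h_def \<tau>_def)
  have suf_bf: "prod_list (map (h p (bf \<circ> \<tau>)) [Suc (Suc s)..<k]) = suf p" for p
    unfolding suf_def by (rule arg_cong[where f=prod_list], rule map_cong) (auto simp: h_def \<tau>_def)
  have pre_p: "pre (p \<circ> \<tau>) = pre p" for p
    unfolding pre_def by (rule arg_cong[where f=prod_list], rule map_cong) (auto simp: h_def \<tau>_def)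
  have suf_p: "suf (p \<circ> \<tau>) = suf p" for p
    unfolding suf_def by (rule arg_cong[where f=prod_list], rule map_cong) (auto simp: h_def \<tau>_def)
  have bft1: "(bf \<circ> \<tau>) s = bf (Suc s)" and bft2: "(bf \<circ> \<tau>) (Suc s) = bf s" by (simp_all add: \<tau>_def)
  define T where "T p = of_int (sign p) * (pre p * G (af (p s)) (af (p (Suc s))) * suf p)" for p
  have sum_eq: "gmin t af (bf \<circ> \<tau>) k c + gmin t af bf k c = (\<Sum>p\<in>P. T p)"
  proof -
    have "gmin t af (bf \<circ> \<tau>) k c + gmin t af bf k c
      = (\<Sum>p\<in>P. of_int (sign p) * prod_list (map (h p (bf \<circ> \<tau>)) [0..<k]) + of_int (sign p) * prod_list (map (h p bf) [0..<k]))"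
      unfolding gmin_def P_def h_def sum.distrib by simp
    also have "\<dots> = (\<Sum>p\<in>P. T p)"
    proof (rule sum.cong[OF refl])
      fix p
      show "of_int (sign p) * prod_list (map (h p (bf \<circ> \<tau>)) [0..<k]) + of_int (sign p) * prod_list (map (h p bf) [0..<k]) = T p"
        unfolding prod_split3[OF sk] pre_bf suf_bf T_def G_def hs hS bft1 bft2
        by (simp add: pre_def suf_def algebra_simps)
    qed
    finally show ?thesis .
  qed
  have tP: "\<tau> permutes {0..<k}" unfolding \<tau>_def using sk by (intro permutes_swap_id) auto
  have perm: "p \<in> P \<Longrightarrow> permutation p" for p
    unfolding P_def using permutes_imp_permutation by blast
  have tt: "\<tau> \<circ> \<tau> = id" by (simp add: \<tau>_def)
  have inP: "p \<circ> \<tau> \<in> P" if "p \<in> P" for p using that tP unfolding P_def by (auto intro: permutes_compose)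
  have reidx: "(\<Sum>p\<in>P. T p) = (\<Sum>p\<in>P. T (p \<circ> \<tau>))"
  proof (rule sum.reindex_bij_witness[where i="\<lambda>p. p \<circ> \<tau>" and j="\<lambda>p. p \<circ> \<tau>"])
    fix p assume "p \<in> P"
    show "p \<circ> \<tau> \<circ> \<tau> = p" by (simp add: comp_assoc tt)
    show "p \<circ> \<tau> \<in> P" by (rule inP) fact
  next
    fix p assume "p \<in> P"
    show "p \<circ> \<tau> \<circ> \<tau> = p" by (simp add: comp_assoc tt)
    show "p \<circ> \<tau> \<in> P" by (rule inP) fact
    show "T (p \<circ> \<tau> \<circ> \<tau>) = T p" by (simp add: comp_assoc tt)
  qed
  have "T (p \<circ> \<tau>) = - T p" if pP: "p \<in> P" for p
  proof -
    have sg: "sign (p \<circ> \<tau>) = - sign p"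
      using sign_compose[OF perm[OF pP], of \<tau>] permutation_swap_id[of s "Suc s"] sign_swap_id[of s "Suc s"]
      by (simp add: \<tau>_def)
    have ps: "p s \<in> {0..<k}" "p (Suc s) \<in> {0..<k}"
    proof -
      have pp: "p permutes {0..<k}" using pP unfolding P_def by simp
      show "p s \<in> {0..<k}" using permutes_in_image[OF pp, of s] sk by simp
      show "p (Suc s) \<in> {0..<k}" using permutes_in_image[OF pp, of "Suc s"] sk by simp
    qed
    have "G (af (p (Suc s))) (af (p s)) = G (af (p s)) (af (p (Suc s)))"
    proof -
      have w: "c - int s - 1 = (c - int s) - 1" by simp
      show ?thesis using sc ps b1 b2 unfolding symcond_def G_def X_def Y_def
        by (metis image_eqI)
    qed
    then show ?thesis unfolding T_def pre_p suf_p sg by (simp add: \<tau>_def)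
  qed
  then have "(\<Sum>p\<in>P. T (p \<circ> \<tau>)) = - (\<Sum>p\<in>P. T p)" by (simp add: sum_negf)
  then have "(\<Sum>p\<in>P. T p) = 0" using reidx by (intro self_neg_zero) simp
  then show ?thesis using sum_eq unfolding \<tau>_def by (simp add: add_eq_0_iff)
qed


lemma gmin_dup_aux:
  fixes t :: "nat \<Rightarrow> nat \<Rightarrow> nat \<Rightarrow> 'a::real_algebra_1"
  assumes sc: "symcond t (af ` {0..<k}) Cs"
  shows "\<forall>bf b. (\<forall>q<k. bf q \<in> Cs) \<longrightarrow> b = a + Suc d \<longrightarrow> b < k \<longrightarrow> bf a = bf b \<longrightarrow> gmin t af bf k c = 0"
proof (induction d)
  case 0
  show ?case
  proof (intro allI impI)
    fix bf b assume C: "\<forall>q<k. bf q \<in> Cs" and b: "b = a + Suc 0" "b < k" and e: "bf a = bf b"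
    have "bf \<circ> Transposition.transpose a (Suc a) = bf"
    proof
      fix x show "(bf \<circ> Transposition.transpose a (Suc a)) x = bf x"
        using e b by (cases "x = a"; cases "x = Suc a") auto
    qed
    moreover have "gmin t af (bf \<circ> Transposition.transpose a (Suc a)) k c = - gmin t af bf k c"
      using b C by (intro gmin_swap[OF _ sc]) auto
    ultimately show "gmin t af bf k c = 0" by (intro self_neg_zero) simp
  qed
next
  case (Suc d)
  show ?case
  proof (intro allI impI)
    fix bf b assume C: "\<forall>q<k. bf q \<in> Cs" and b: "b = a + Suc (Suc d)" "b < k" and e: "bf a = bf b"
    define s where "s = a + Suc d"
    have bs: "b = Suc s" using b by (simp add: s_def)
    define bf' where "bf' = bf \<circ> Transposition.transpose s (Suc s)"
    have C': "\<forall>q<k. bf' q \<in> Cs"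
    proof (intro allI impI)
      fix q assume "q < k"
      then show "bf' q \<in> Cs" using C b bs unfolding bf'_def
        by (cases "q = s"; cases "q = Suc s") auto
    qed
    have e': "bf' a = bf' s" unfolding bf'_def using e bs by (simp add: s_def)
    have "gmin t af bf' k c = 0"
      using Suc.IH C' e' b bs unfolding s_def by auto
    moreover have "gmin t af bf' k c = - gmin t af bf k c"
      unfolding bf'_def using b bs C by (intro gmin_swap[OF _ sc]) auto
    ultimately show "gmin t af bf k c = 0" by simp
  qed
qed

lemma gmin_dup:
  fixes t :: "nat \<Rightarrow> nat \<Rightarrow> nat \<Rightarrow> 'a::real_algebra_1"
  assumes sc: "symcond t (af ` {0..<k}) Cs" and C: "\<forall>q<k. bf q \<in> Cs"
    and ab: "a < b" "b < k" and e: "bf a = bf b"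
  shows "gmin t af bf k c = 0"
proof -
  have "b = a + Suc (b - a - 1)" using ab by simp
  then show ?thesis using gmin_dup_aux[OF sc, of a "b - a - 1"] C ab e by blast
qed

definition Ycof :: "(nat \<Rightarrow> nat \<Rightarrow> nat \<Rightarrow> 'a::real_algebra_1) \<Rightarrow> (nat \<Rightarrow> nat) \<Rightarrow> (nat \<Rightarrow> nat) \<Rightarrow> nat \<Rightarrow> int \<Rightarrow> nat \<Rightarrow> 'a fps" where
  "Ycof t af bf k c q = (\<Sum>p\<in>{p. p permutes {0..<Suc k} \<and> p k = q}.
      of_int (sign p) * prod_list (map (\<lambda>s. shiftu (c - int s) (Tser t (af (p s)) (bf s))) [0..<k]))"

lemma gmin_expand:
  "gmin t af bf (Suc k) c = (\<Sum>q\<in>{0..<Suc k}. Ycof t af bf k c q * shiftu (c - int k) (Tser t (af q) (bf k)))"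
proof -
  define P where "P = {p. p permutes {0..<Suc k}}"
  define pr' where "pr' p = prod_list (map (\<lambda>s. shiftu (c - int s) (Tser t (af (p s)) (bf s))) [0..<k])" for p
  have fP: "finite P" unfolding P_def by (rule finite_permutations) simp
  have "gmin t af bf (Suc k) c = (\<Sum>p\<in>P. of_int (sign p) * pr' p * shiftu (c - int k) (Tser t (af (p k)) (bf k)))"
    unfolding gmin_def P_def pr'_def by (simp add: mult.assoc)
  also have "\<dots> = (\<Sum>q\<in>{0..<Suc k}. \<Sum>p\<in>{p\<in>P. p k = q}. of_int (sign p) * pr' p * shiftu (c - int k) (Tser t (af (p k)) (bf k)))"
  proof (rule sum.group[symmetric, OF fP])
    show "finite {0..<Suc k}" by simp
    show "(\<lambda>p. p k) ` P \<subseteq> {0..<Suc k}"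
    proof
      fix x assume "x \<in> (\<lambda>p. p k) ` P"
      then obtain p where p: "p \<in> P" "x = p k" by blast
      then show "x \<in> {0..<Suc k}" using permutes_in_image[of p "{0..<Suc k}" k] unfolding P_def by simp
    qed
  qed
  also have "\<dots> = (\<Sum>q\<in>{0..<Suc k}. Ycof t af bf k c q * shiftu (c - int k) (Tser t (af q) (bf k)))"
  proof (rule sum.cong[OF refl])
    fix q
    have "(\<Sum>p\<in>{p\<in>P. p k = q}. of_int (sign p) * pr' p * shiftu (c - int k) (Tser t (af (p k)) (bf k)))
      = (\<Sum>p\<in>{p\<in>P. p k = q}. of_int (sign p) * pr' p * shiftu (c - int k) (Tser t (af q) (bf k)))"
      by (rule sum.cong) auto
    also have "\<dots> = (\<Sum>p\<in>{p\<in>P. p k = q}. of_int (sign p) * pr' p) * shiftu (c - int k) (Tser t (af q) (bf k))"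
      by (simp add: sum_distrib_right)
    also have "{p\<in>P. p k = q} = {p. p permutes {0..<Suc k} \<and> p k = q}" unfolding P_def by simp
    finally show "(\<Sum>p\<in>{p\<in>P. p k = q}. of_int (sign p) * pr' p * shiftu (c - int k) (Tser t (af (p k)) (bf k)))
       = Ycof t af bf k c q * shiftu (c - int k) (Tser t (af q) (bf k))"
      unfolding Ycof_def pr'_def P_def by simp
  qed
  finally show ?thesis .
qed

lemma Ycof_cong: "(\<And>s. s < k \<Longrightarrow> bf1 s = bf2 s) \<Longrightarrow> Ycof t af bf1 k c q = Ycof t af bf2 k c q"
  unfolding Ycof_def
  by (intro sum.cong refl arg_cong2[where f="(*)"] arg_cong[where f=prod_list] map_cong) auto

lemma perm_fix: "{p. p permutes {0..<Suc k} \<and> p k = k} = {p. p permutes {0..<k}}"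
proof (rule set_eqI)
  fix p
  show "p \<in> {p. p permutes {0..<Suc k} \<and> p k = k} \<longleftrightarrow> p \<in> {p. p permutes {0..<k}}"
  proof
    assume "p \<in> {p. p permutes {0..<Suc k} \<and> p k = k}"
    then have p: "p permutes {0..<Suc k}" "p k = k" by simp_all
    have "p permutes {0..<k}" unfolding permutes_def
    proof
      show "\<forall>x. x \<notin> {0..<k} \<longrightarrow> p x = x"
      proof (intro allI impI)
        fix x assume "x \<notin> {0..<k}"
        then show "p x = x" using p permutes_not_in[OF p(1), of x] by (cases "x = k") auto
      qed
      show "\<forall>y. \<exists>!x. p x = y" using p(1) unfolding permutes_def by blast
    qed
    then show "p \<in> {p. p permutes {0..<k}}" by simp
  next
    assume "p \<in> {p. p permutes {0..<k}}"
    then have p: "p permutes {0..<k}" by simp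
    have "p permutes {0..<Suc k}" by (rule permutes_subset[OF p]) auto
    moreover have "p k = k" by (rule permutes_not_in[OF p]) simp
    ultimately show "p \<in> {p. p permutes {0..<Suc k} \<and> p k = k}" by simp
  qed
qed

lemma Ycof_last: "Ycof t af bf k c k = gmin t af bf k c"
  unfolding Ycof_def gmin_def perm_fix ..

lemma gmin_cong:
  assumes "\<And>x. x < k \<Longrightarrow> af1 x = af2 x" "\<And>x. x < k \<Longrightarrow> bf1 x = bf2 x"
  shows "gmin t af1 bf1 k c = gmin t af2 bf2 k c"
  unfolding gmin_def
proof (rule sum.cong[OF refl])
  fix p assume "p \<in> {p. p permutes {0..<k}}"
  then have pp: "p permutes {0..<k}" by simp
  have "\<And>s. s < k \<Longrightarrow> p s < k" using permutes_in_image[OF pp] by simp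
  then show "of_int (sign p) * prod_list (map (\<lambda>s. shiftu (c - int s) (Tser t (af1 (p s)) (bf1 s))) [0..<k])
    = of_int (sign p) * prod_list (map (\<lambda>s. shiftu (c - int s) (Tser t (af2 (p s)) (bf2 s))) [0..<k])"
    using assms by (intro arg_cong2[where f="(*)"] refl arg_cong[where f=prod_list] map_cong) auto
qed


lemma pow_low:
  fixes h :: "'a::ring_1 fps"
  assumes h0: "h $ 0 = 0"
  shows "n < k \<Longrightarrow> (h ^ k) $ n = 0"
proof (induction k arbitrary: n)
  case 0 then show ?case by simp
next
  case (Suc k)
  have "(h ^ Suc k) $ n = (\<Sum>i=0..n. h $ i * (h ^ k) $ (n - i))" by (simp add: fps_mult_nth)
  also have "\<dots> = 0"
  proof (rule sum.neutral, rule ballI)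
    fix i assume iin: "i \<in> {0..n}"
    show "h $ i * (h ^ k) $ (n - i) = 0"
    proof (cases "i = 0")
      case True then show ?thesis using h0 by simp
    next
      case False then have "n - i < k" using Suc.prems iin by auto
      then show ?thesis using Suc.IH by simp
    qed
  qed
  finally show ?case .
qed

lemma telescope_left: "(1 - h) * (\<Sum>i<K. h ^ i) = 1 - (h::'a::ring_1) ^ K"
proof (induction K)
  case 0 then show ?case by simp
next
  case (Suc K)
  have "(1 - h) * (\<Sum>i<Suc K. h ^ i) = (1 - h) * (\<Sum>i<K. h ^ i) + (1 - h) * h ^ K"
    by (simp add: distrib_left)
  also have "\<dots> = 1 - h ^ Suc K" unfolding Suc.IH by (simp add: algebra_simps)
  finally show ?case .
qed

lemma telescope_right: "(\<Sum>i<K. h ^ i) * (1 - h) = 1 - (h::'a::ring_1) ^ K"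
proof (induction K)
  case 0 then show ?case by simp
next
  case (Suc K)
  have "(\<Sum>i<Suc K. h ^ i) * (1 - h) = (\<Sum>i<K. h ^ i) * (1 - h) + h ^ K * (1 - h)"
    by (simp add: distrib_right)
  also have "\<dots> = 1 - h ^ Suc K" unfolding Suc.IH by (simp add: algebra_simps power_commutes)
  finally show ?case .
qed

lemma fps_inv_ex:
  fixes f :: "'a::ring_1 fps"
  assumes f0: "f $ 0 = 1"
  shows "\<exists>g. f * g = 1 \<and> g * f = 1"
proof -
  define h where "h = 1 - f"
  have h0: "h $ 0 = 0" using f0 by (simp add: h_def)
  define S where "S K = (\<Sum>i<K. h ^ i)" for K
  define g where "g = Abs_fps (\<lambda>n. S (Suc n) $ n)"
  have stab: "m \<le> M \<Longrightarrow> S (Suc M) $ m = S (Suc m) $ m" for m M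
  proof -
    assume mM: "m \<le> M"
    have "S (Suc M) $ m = (\<Sum>i<Suc M. (h ^ i) $ m)" by (simp add: S_def fps_sum_nth)
    also have "\<dots> = (\<Sum>i<Suc m. (h ^ i) $ m)"
      using mM by (intro sum.mono_neutral_right) (auto simp: pow_low[OF h0])
    also have "\<dots> = S (Suc m) $ m" by (simp add: S_def fps_sum_nth)
    finally show ?thesis .
  qed
  have gS: "g $ m = S (Suc M) $ m" if "m \<le> M" for m M
    unfolding g_def fps_nth_Abs_fps by (rule sym, rule stab[OF that])
  have fS: "f = 1 - h" by (simp add: h_def)
  have "f * g = 1"
  proof (rule fps_ext)
    fix n
    have "(f * g) $ n = (\<Sum>i=0..n. f $ i * g $ (n - i))" by (simp add: fps_mult_nth)
    also have "\<dots> = (\<Sum>i=0..n. f $ i * S (Suc n) $ (n - i))" by (intro sum.cong refl) (simp add: gS[of _ n])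
    also have "\<dots> = (f * S (Suc n)) $ n" by (simp add: fps_mult_nth)
    also have "\<dots> = (1 - h ^ Suc n) $ n" unfolding fS S_def telescope_left ..
    also have "\<dots> = 1 $ n" using pow_low[OF h0, of n "Suc n"] by simp
    finally show "(f * g) $ n = 1 $ n" .
  qed
  moreover have "g * f = 1"
  proof (rule fps_ext)
    fix n
    have "(g * f) $ n = (\<Sum>i=0..n. g $ i * f $ (n - i))" by (simp add: fps_mult_nth)
    also have "\<dots> = (\<Sum>i=0..n. S (Suc n) $ i * f $ (n - i))" by (intro sum.cong refl) (simp add: gS[of _ n])
    also have "\<dots> = (S (Suc n) * f) $ n" by (simp add: fps_mult_nth)
    also have "\<dots> = (1 - h ^ Suc n) $ n" unfolding fS S_def telescope_right ..
    also have "\<dots> = 1 $ n" using pow_low[OF h0, of n "Suc n"] by simp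
    finally show "(g * f) $ n = 1 $ n" .
  qed
  ultimately show ?thesis by blast
qed

lemma rinv_prop:
  fixes x :: "'a::ring_1"
  assumes "invertible_el x"
  shows "x * rinv x = 1 \<and> rinv x * x = 1"
proof -
  obtain y where y: "x * y = 1" "y * x = 1" using assms unfolding invertible_el_def by blast
  have uniq: "z = y" if "x * z = 1 \<and> z * x = 1" for z
  proof -
    have "z = z * (x * y)" using y by simp
    also have "\<dots> = (z * x) * y" by (simp add: mult.assoc)
    also have "\<dots> = y" using that by simp
    finally show ?thesis .
  qed
  have "rinv x = y" unfolding rinv_def by (rule the_equality[where P="\<lambda>z. x * z = 1 \<and> z * x = 1", OF conjI[OF y]]) (rule uniq)
  then show ?thesis using y by simp
qed

lemma prod_list_nth0: "prod_list (map f xs) $ 0 = prod_list (map (\<lambda>x. f x $ 0) xs)"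
  by (induction xs) simp_all

lemma prod_list_ind: "prod_list (map (\<lambda>x. if P x then 1 else 0) xs) = (if (\<forall>x\<in>set xs. P x) then 1 else (0::'a::ring_1))"
  by (induction xs) auto

lemma shiftu_nth0: "shiftu c f $ 0 = f $ 0" by (simp add: shiftu_def)

lemma gmin_nth0:
  assumes ab: "\<And>x. x < k \<Longrightarrow> af x = bf x" and inj: "\<And>x y. x < k \<Longrightarrow> y < k \<Longrightarrow> af x = af y \<Longrightarrow> x = y"
  shows "gmin t af bf k c $ 0 = 1"
proof -
  define P where "P = {p. p permutes {0..<k}}"
  have "gmin t af bf k c $ 0 = (\<Sum>p\<in>P. of_int (sign p) * prod_list (map (\<lambda>s. if p s = s then 1 else 0) [0..<k]))"
    unfolding gmin_def fps_sum_nth P_def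
  proof (rule sum.cong[OF refl])
    fix p assume "p \<in> {p. p permutes {0..<k}}"
    then have pp: "p permutes {0..<k}" by simp
    have "(of_int (sign p) * prod_list (map (\<lambda>s. shiftu (c - int s) (Tser t (af (p s)) (bf s))) [0..<k])) $ 0
      = of_int (sign p) * prod_list (map (\<lambda>s. tc t (af (p s)) (bf s) 0) [0..<k])"
      by (simp add: fps_of_int[symmetric] prod_list_nth0 shiftu_nth0 Tser_nth o_def)
    also have "\<dots> = of_int (sign p) * prod_list (map (\<lambda>s. if p s = s then 1 else 0) [0..<k])"
    proof -
      have th: "tc t (af (p s)) (bf s) 0 = (if p s = s then 1 else 0)" if "s \<in> set [0..<k]" for s
      proof -
        have sk: "s < k" "p s < k" using that permutes_in_image[OF pp, of s] by auto
        have "af (p s) = bf s \<longleftrightarrow> p s = s" using sk ab inj by metis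
        then show ?thesis by (simp add: tc_def)
      qed
      show ?thesis by (intro arg_cong2[where f="(*)"] refl arg_cong[where f=prod_list] map_cong) (simp add: th)
    qed
    finally show "(of_int (sign p) * prod_list (map (\<lambda>s. shiftu (c - int s) (Tser t (af (p s)) (bf s))) [0..<k])) $ 0
      = of_int (sign p) * prod_list (map (\<lambda>s. if p s = s then 1 else 0) [0..<k])" .
  qed
  also have "\<dots> = (\<Sum>p\<in>P. if p = id then 1 else 0)"
  proof (rule sum.cong[OF refl])
    fix p assume "p \<in> P"
    then have pp: "p permutes {0..<k}" by (simp add: P_def)
    have "(\<forall>s\<in>set [0..<k]. p s = s) \<longleftrightarrow> p = id"
    proof
      assume a: "\<forall>s\<in>set [0..<k]. p s = s"
      show "p = id"
      proof
        fix x show "p x = id x" using a permutes_not_in[OF pp, of x] by (cases "x < k") auto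
      qed
    qed simp
    then show "of_int (sign p) * prod_list (map (\<lambda>s. if p s = s then 1 else 0) [0..<k]) = (if p = id then 1 else 0)"
      unfolding prod_list_ind by auto
  qed
  also have "\<dots> = 1"
  proof -
    have "id \<in> P" by (simp add: P_def permutes_id)
    moreover have "finite P" unfolding P_def by (rule finite_permutations) simp
    ultimately show ?thesis by (simp add: sum.delta')
  qed
  finally show ?thesis .
qed


definition mm :: "nat set \<Rightarrow> (nat \<Rightarrow> nat \<Rightarrow> 'a::ring_1) \<Rightarrow> (nat \<Rightarrow> nat \<Rightarrow> 'a) \<Rightarrow> nat \<Rightarrow> nat \<Rightarrow> 'a" where
  "mm I A B p q = (\<Sum>r\<in>I. A p r * B r q)"

definition idm :: "nat \<Rightarrow> nat \<Rightarrow> 'a::ring_1" where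
  "idm p q = (if p = q then 1 else 0)"

fun mpow :: "nat set \<Rightarrow> (nat \<Rightarrow> nat \<Rightarrow> 'a::ring_1) \<Rightarrow> nat \<Rightarrow> nat \<Rightarrow> nat \<Rightarrow> 'a" where
  "mpow I H 0 = idm"
| "mpow I H (Suc k) = mm I H (mpow I H k)"

lemma mm_assoc: "mm I (mm I A B) C p q = mm I A (mm I B C) p q"
proof -
  have "mm I (mm I A B) C p q = (\<Sum>r\<in>I. \<Sum>s\<in>I. A p s * B s r * C r q)"
    unfolding mm_def by (simp add: sum_distrib_right)
  also have "\<dots> = (\<Sum>s\<in>I. \<Sum>r\<in>I. A p s * B s r * C r q)" by (rule sum.swap)
  also have "\<dots> = mm I A (mm I B C) p q"
    unfolding mm_def by (simp add: sum_distrib_left mult.assoc)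
  finally show ?thesis .
qed

lemma mm_congR: "(\<And>r. r \<in> I \<Longrightarrow> X r q = Y r q) \<Longrightarrow> mm I H X p q = mm I H Y p q"
  unfolding mm_def by (rule sum.cong) auto

lemma mm_congL: "(\<And>r. r \<in> I \<Longrightarrow> X p r = Y p r) \<Longrightarrow> mm I X H p q = mm I Y H p q"
  unfolding mm_def by (rule sum.cong) auto

lemma mm_idm_left: assumes "finite I" "p \<in> I" shows "mm I idm B p q = B p q"
proof -
  have "mm I idm B p q = (\<Sum>r\<in>I. if p = r then B r q else 0)"
    unfolding mm_def idm_def by (rule sum.cong) auto
  then show ?thesis using assms by (simp add: sum.delta')
qed

lemma mm_idm_right: assumes "finite I" "q \<in> I" shows "mm I A idm p q = A p q"
proof -
  have "mm I A idm p q = (\<Sum>r\<in>I. if r = q then A p r else 0)"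
    unfolding mm_def idm_def by (rule sum.cong) auto
  then show ?thesis using assms by (simp add: sum.delta)
qed

lemma mpow_right: "finite I \<Longrightarrow> p \<in> I \<Longrightarrow> q \<in> I \<Longrightarrow> mpow I H (Suc k) p q = mm I (mpow I H k) H p q"
proof (induction k arbitrary: p q)
  case 0 then show ?case by (simp add: mm_idm_left mm_idm_right)
next
  case (Suc k)
  have "mpow I H (Suc (Suc k)) p q = mm I H (mpow I H (Suc k)) p q" by simp
  also have "\<dots> = mm I H (mm I (mpow I H k) H) p q"
    by (rule mm_congR) (use Suc in auto)
  also have "\<dots> = mm I (mm I H (mpow I H k)) H p q" by (rule mm_assoc[symmetric])
  also have "\<dots> = mm I (mpow I H (Suc k)) H p q" by simp
  finally show ?case .
qed

definition msum :: "nat set \<Rightarrow> (nat \<Rightarrow> nat \<Rightarrow> 'a::ring_1) \<Rightarrow> nat \<Rightarrow> nat \<Rightarrow> nat \<Rightarrow> 'a" where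
  "msum I H K p q = (\<Sum>i<K. mpow I H i p q)"

lemma tele_left:
  assumes fI: "finite I" and p: "p \<in> I"
  shows "mm I (\<lambda>a b. idm a b - H a b) (msum I H K) p q = idm p q - mpow I H K p q"
proof (induction K)
  case 0 then show ?case by (simp add: mm_def msum_def)
next
  case (Suc K)
  have "mm I (\<lambda>a b. idm a b - H a b) (msum I H (Suc K)) p q
     = mm I (\<lambda>a b. idm a b - H a b) (msum I H K) p q + mm I (\<lambda>a b. idm a b - H a b) (mpow I H K) p q"
    unfolding mm_def msum_def by (simp add: distrib_left sum.distrib)
  also have "mm I (\<lambda>a b. idm a b - H a b) (mpow I H K) p q = mm I idm (mpow I H K) p q - mm I H (mpow I H K) p q"
    unfolding mm_def by (simp add: left_diff_distrib sum_subtractf)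
  also have "\<dots> = mpow I H K p q - mpow I H (Suc K) p q" using fI p by (simp add: mm_idm_left)
  finally show ?case unfolding Suc.IH by simp
qed

lemma tele_right:
  assumes fI: "finite I" and q: "q \<in> I" and p: "p \<in> I"
  shows "mm I (msum I H K) (\<lambda>a b. idm a b - H a b) p q = idm p q - mpow I H K p q"
proof (induction K)
  case 0 then show ?case by (simp add: mm_def msum_def)
next
  case (Suc K)
  have "mm I (msum I H (Suc K)) (\<lambda>a b. idm a b - H a b) p q
     = mm I (msum I H K) (\<lambda>a b. idm a b - H a b) p q + mm I (mpow I H K) (\<lambda>a b. idm a b - H a b) p q"
    unfolding mm_def msum_def by (simp add: distrib_right sum.distrib)
  also have "mm I (mpow I H K) (\<lambda>a b. idm a b - H a b) p q = mm I (mpow I H K) idm p q - mm I (mpow I H K) H p q"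
    unfolding mm_def by (simp add: right_diff_distrib sum_subtractf)
  also have "\<dots> = mpow I H K p q - mpow I H (Suc K) p q"
    using fI q p by (simp add: mm_idm_right mpow_right[symmetric])
  finally show ?case unfolding Suc.IH by simp
qed

lemma mpow_low:
  fixes H :: "nat \<Rightarrow> nat \<Rightarrow> 'a::ring_1 fps"
  assumes H0: "\<And>a b. H a b $ 0 = 0"
  shows "n < k \<Longrightarrow> mpow I H k p q $ n = 0"
proof (induction k arbitrary: n p q)
  case 0 then show ?case by simp
next
  case (Suc k)
  have "mpow I H (Suc k) p q $ n = (\<Sum>r\<in>I. \<Sum>i=0..n. H p r $ i * mpow I H k r q $ (n - i))"
    by (simp add: mm_def fps_sum_nth fps_mult_nth)
  also have "\<dots> = 0"
  proof (rule sum.neutral, rule ballI, rule sum.neutral, rule ballI)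
    fix r i assume iin: "i \<in> {0..n}"
    show "H p r $ i * mpow I H k r q $ (n - i) = 0"
    proof (cases "i = 0")
      case True then show ?thesis using H0 by simp
    next
      case False then have "n - i < k" using Suc.prems iin by auto
      then show ?thesis using Suc.IH by simp
    qed
  qed
  finally show ?case .
qed

lemma mat_inv_ex:
  fixes B :: "nat \<Rightarrow> nat \<Rightarrow> 'a::ring_1 fps"
  assumes fI: "finite I" and B0: "\<And>a b. B a b $ 0 = idm a b"
  shows "mat_invertible_on I I B"
proof -
  define H where "H a b = idm a b - B a b" for a b
  have H0: "H a b $ 0 = 0" for a b
    by (simp add: H_def B0) (simp add: idm_def)
  have BH: "B = (\<lambda>a b. idm a b - H a b)" by (simp add: H_def fun_eq_iff)
  define S where "S = msum I H"
  have stab: "S (Suc M) q p $ m = S (Suc m) q p $ m" if "m \<le> M" for m M q p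
  proof -
    have "S (Suc M) q p $ m = (\<Sum>i<Suc M. mpow I H i q p $ m)" by (simp add: S_def msum_def fps_sum_nth)
    also have "\<dots> = (\<Sum>i<Suc m. mpow I H i q p $ m)"
      using that by (intro sum.mono_neutral_right) (auto simp: mpow_low[OF H0])
    also have "\<dots> = S (Suc m) q p $ m" by (simp add: S_def msum_def fps_sum_nth)
    finally show ?thesis .
  qed
  define Ni where "Ni q p = (if q \<in> I \<and> p \<in> I then Abs_fps (\<lambda>n. S (Suc n) q p $ n) else 0)" for q p
  have NS: "Ni q p $ m = S (Suc M) q p $ m" if "m \<le> M" "q \<in> I" "p \<in> I" for m M q p
    using that unfolding Ni_def by (simp add: stab[OF that(1)])
  have idm_n: "idm p q $ n - mpow I H (Suc n) p q $ n = idm p q $ n" for p q n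
    using mpow_low[OF H0, of n "Suc n"] by simp
  have "is_mat_inv_on I I B Ni"
    unfolding is_mat_inv_on_def
  proof (intro conjI ballI allI impI)
    fix q p assume "q \<notin> I \<or> p \<notin> I" then show "Ni q p = 0" by (auto simp: Ni_def)
  next
    fix p p' assume pI: "p \<in> I" and p'I: "p' \<in> I"
    show "(\<Sum>q\<in>I. B p q * Ni q p') = (if p = p' then 1 else 0)"
    proof (rule fps_ext)
      fix n
      have "(\<Sum>q\<in>I. B p q * Ni q p') $ n = (\<Sum>q\<in>I. \<Sum>i=0..n. B p q $ i * Ni q p' $ (n - i))"
        by (simp add: fps_sum_nth fps_mult_nth)
      also have "\<dots> = (\<Sum>q\<in>I. \<Sum>i=0..n. B p q $ i * S (Suc n) q p' $ (n - i))"
        using p'I by (intro sum.cong refl) (simp add: NS[of _ n])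
      also have "\<dots> = mm I B (S (Suc n)) p p' $ n"
        by (simp add: mm_def fps_sum_nth fps_mult_nth)
      also have "\<dots> = (idm p p' - mpow I H (Suc n) p p') $ n"
        unfolding BH S_def tele_left[OF fI pI] ..
      also have "\<dots> = idm p p' $ n" using idm_n by simp
      finally show "(\<Sum>q\<in>I. B p q * Ni q p') $ n = (if p = p' then 1 else 0) $ n"
        by (simp add: idm_def)
    qed
  next
    fix q q' assume qI: "q \<in> I" and q'I: "q' \<in> I"
    show "(\<Sum>p\<in>I. Ni q p * B p q') = (if q = q' then 1 else 0)"
    proof (rule fps_ext)
      fix n
      have "(\<Sum>p\<in>I. Ni q p * B p q') $ n = (\<Sum>p\<in>I. \<Sum>i=0..n. Ni q p $ i * B p q' $ (n - i))"
        by (simp add: fps_sum_nth fps_mult_nth)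
      also have "\<dots> = (\<Sum>p\<in>I. \<Sum>i=0..n. S (Suc n) q p $ i * B p q' $ (n - i))"
        using qI by (intro sum.cong refl) (simp add: NS[of _ n])
      also have "\<dots> = mm I (S (Suc n)) B q q' $ n"
        by (simp add: mm_def fps_sum_nth fps_mult_nth)
      also have "\<dots> = (idm q q' - mpow I H (Suc n) q q') $ n"
        unfolding BH S_def tele_right[OF fI q'I qI] ..
      also have "\<dots> = idm q q' $ n" using idm_n by simp
      finally show "(\<Sum>p\<in>I. Ni q p * B p q') $ n = (if q = q' then 1 else 0) $ n"
        by (simp add: idm_def)
    qed
  qed
  then show ?thesis unfolding mat_invertible_on_def by blast
qed

lemma mat_inv_unique:
  fixes M :: "nat \<Rightarrow> nat \<Rightarrow> 'a::ring_1"
  assumes fI: "finite I" and fJ: "finite J"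
    and N1: "is_mat_inv_on I J M N1" and N2: "is_mat_inv_on I J M N2"
  shows "N1 = N2"
proof (intro ext)
  fix q p
  show "N1 q p = N2 q p"
  proof (cases "q \<in> J \<and> p \<in> I")
    case False then show ?thesis using N1 N2 unfolding is_mat_inv_on_def by auto
  next
    case True
    then have qJ: "q \<in> J" and pI: "p \<in> I" by auto
    have "(\<Sum>q'\<in>J. (if q = q' then 1 else 0) * N1 q' p) = (\<Sum>q'\<in>J. if q = q' then N1 q' p else 0)"
      by (rule sum.cong) auto
    then have "N1 q p = (\<Sum>q'\<in>J. (if q = q' then 1 else 0) * N1 q' p)"
      using qJ fJ by (simp add: sum.delta')
    also have "\<dots> = (\<Sum>q'\<in>J. (\<Sum>p'\<in>I. N2 q p' * M p' q') * N1 q' p)"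
      using N2 qJ unfolding is_mat_inv_on_def by (intro sum.cong refl) auto
    also have "\<dots> = (\<Sum>q'\<in>J. \<Sum>p'\<in>I. N2 q p' * M p' q' * N1 q' p)"
      by (simp add: sum_distrib_right)
    also have "\<dots> = (\<Sum>p'\<in>I. \<Sum>q'\<in>J. N2 q p' * M p' q' * N1 q' p)" by (rule sum.swap)
    also have "\<dots> = (\<Sum>p'\<in>I. N2 q p' * (\<Sum>q'\<in>J. M p' q' * N1 q' p))"
      by (simp add: sum_distrib_left mult.assoc)
    also have "\<dots> = (\<Sum>p'\<in>I. N2 q p' * (if p' = p then 1 else 0))"
      using N1 pI unfolding is_mat_inv_on_def by (intro sum.cong refl) auto
    also have "\<dots> = (\<Sum>p'\<in>I. if p' = p then N2 q p' else 0)" by (rule sum.cong) auto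
    also have "\<dots> = N2 q p" using pI fI by (simp add: sum.delta)
    finally show ?thesis .
  qed
qed

lemma mat_inv_on_prop:
  fixes M :: "nat \<Rightarrow> nat \<Rightarrow> 'a::ring_1"
  assumes fI: "finite I" and fJ: "finite J" and inv: "mat_invertible_on I J M"
  shows "is_mat_inv_on I J M (mat_inv_on I J M)"
proof -
  obtain N where N: "is_mat_inv_on I J M N" using inv unfolding mat_invertible_on_def by blast
  have "mat_inv_on I J M = N" unfolding mat_inv_on_def
    by (rule the_equality[where P="is_mat_inv_on I J M", OF N]) (rule mat_inv_unique[OF fI fJ _ N])
  then show ?thesis using N by simp
qed


lemma shiftu_zero: "shiftu 0 (f::'a::real_algebra_1 fps) = f"
proof (rule fps_ext)
  fix a
  have b: "bet 0 a r = (if r = a then 1 else 0)" for r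
    by (cases "r \<le> a"; cases "r = a") (auto simp: bet_eq)
  have "shiftu 0 f $ a = (\<Sum>r\<le>a. of_real (bet 0 a r) * f $ r)" by (rule shiftu_nth)
  also have "\<dots> = (\<Sum>r\<le>a. if r = a then f $ r else 0)" by (rule sum.cong) (auto simp: b)
  also have "\<dots> = f $ a" by simp
  finally show "shiftu 0 f $ a = f $ a" .
qed

lemma grp_sym: "(a::'b::ab_group_add) - e = c - f \<Longrightarrow> b - f = d - e \<Longrightarrow> a + b = c + d"
proof -
  assume h1: "a - e = c - f" and h2: "b - f = d - e"
  have "a + b = (a - e) + (b - f) + e + f" by (simp add: algebra_simps)
  also have "\<dots> = (c - f) + (d - e) + e + f" unfolding h1 h2 ..
  also have "\<dots> = c + d" by (simp add: algebra_simps)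
  finally show ?thesis .
qed

lemma symcond_rtt:
  fixes t :: "nat \<Rightarrow> nat \<Rightarrow> nat \<Rightarrow> 'a::real_algebra_1"
  assumes rtt: "RTT g n t"
    and Rs: "Rs \<subseteq> {1..Ndim g n}" and Cs: "Cs \<subseteq> {1..Ndim g n}"
    and nR: "\<And>x y. x \<in> Rs \<Longrightarrow> y \<in> Rs \<Longrightarrow> x \<noteq> y \<Longrightarrow> y \<noteq> pr (Ndim g n) x"
    and nC: "\<And>x y. x \<in> Cs \<Longrightarrow> y \<in> Cs \<Longrightarrow> y \<noteq> pr (Ndim g n) x"
  shows "symcond t Rs Cs"
  unfolding symcond_def
proof (intro ballI allI)
  fix x y b1 b2 w assume x: "x \<in> Rs" and y: "y \<in> Rs" and b1: "b1 \<in> Cs" and b2: "b2 \<in> Cs"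
  show "shiftu w (Tser t x b1) * shiftu (w-1) (Tser t y b2) + shiftu w (Tser t x b2) * shiftu (w-1) (Tser t y b1)
   = shiftu w (Tser t y b1) * shiftu (w-1) (Tser t x b2) + shiftu w (Tser t y b2) * shiftu (w-1) (Tser t x b1)"
  proof (cases "x = y")
    case True then show ?thesis by simp
  next
    case False
    have i: "x \<in> {1..Ndim g n}" "y \<in> {1..Ndim g n}" "b1 \<in> {1..Ndim g n}" "b2 \<in> {1..Ndim g n}"
      using x y b1 b2 Rs Cs by auto
    have e1: "y \<noteq> pr (Ndim g n) x" using nR[OF x y False] .
    show ?thesis
      by (rule grp_sym[OF rtt_fps[OF rtt i(1) i(3) i(2) i(4) e1 nC[OF b1 b2]]
                          rtt_fps[OF rtt i(1) i(4) i(2) i(3) e1 nC[OF b2 b1]]])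
  qed
qed

lemma final_alg:
  fixes T Binv :: "nat \<Rightarrow> nat \<Rightarrow> 'b::ring_1" and Y :: "nat \<Rightarrow> 'b"
  assumes inv: "\<And>p p'. p \<in> {1..m} \<Longrightarrow> p' \<in> {1..m} \<Longrightarrow> (\<Sum>q\<in>{1..m}. T p q * Binv q p') = (if p = p' then 1 else 0)"
    and van: "\<And>l. l \<in> {1..m} \<Longrightarrow> (\<Sum>c<m. Y c * T (Suc c) l) + D * T i l = 0"
  shows "D * (T i j - (\<Sum>q\<in>{1..m}. \<Sum>p\<in>{1..m}. T i q * Binv q p * T p j)) = (\<Sum>c<m. Y c * T (Suc c) j) + D * T i j"
proof -
  define Q where "Q = {1..m::nat}"
  define E where "E l = (\<Sum>c<m. Y c * T (Suc c) l)" for l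
  have A: "D * T i q = - E q" if "q \<in> Q" for q
    using van[of q] that unfolding E_def Q_def by (simp add: eq_neg_iff_add_eq_0 add.commute)
  have B: "(\<Sum>q\<in>Q. E q * Binv q p) = (\<Sum>c<m. if Suc c = p then Y c else 0)" if "p \<in> Q" for p
  proof -
    have "(\<Sum>q\<in>Q. E q * Binv q p) = (\<Sum>q\<in>Q. \<Sum>c<m. Y c * (T (Suc c) q * Binv q p))"
      unfolding E_def by (simp add: sum_distrib_right mult.assoc)
    also have "\<dots> = (\<Sum>c<m. \<Sum>q\<in>Q. Y c * (T (Suc c) q * Binv q p))" by (rule sum.swap)
    also have "\<dots> = (\<Sum>c<m. Y c * (\<Sum>q\<in>Q. T (Suc c) q * Binv q p))" by (simp add: sum_distrib_left)
    also have "\<dots> = (\<Sum>c<m. Y c * (if Suc c = p then 1 else 0))"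
      using that inv unfolding Q_def by (intro sum.cong refl) auto
    also have "\<dots> = (\<Sum>c<m. if Suc c = p then Y c else 0)" by (intro sum.cong refl) auto
    finally show ?thesis .
  qed
  have C: "(\<Sum>q\<in>Q. \<Sum>p\<in>Q. E q * Binv q p * T p j) = E j"
  proof -
    have "(\<Sum>q\<in>Q. \<Sum>p\<in>Q. E q * Binv q p * T p j) = (\<Sum>p\<in>Q. \<Sum>q\<in>Q. E q * Binv q p * T p j)" by (rule sum.swap)
    also have "\<dots> = (\<Sum>p\<in>Q. (\<Sum>q\<in>Q. E q * Binv q p) * T p j)" by (simp add: sum_distrib_right)
    also have "\<dots> = (\<Sum>p\<in>Q. (\<Sum>c<m. if Suc c = p then Y c else 0) * T p j)" by (intro sum.cong refl) (simp add: B)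
    also have "\<dots> = (\<Sum>p\<in>Q. \<Sum>c<m. if Suc c = p then Y c * T p j else 0)"
      unfolding sum_distrib_right by (intro sum.cong refl) simp
    also have "\<dots> = (\<Sum>c<m. \<Sum>p\<in>Q. if Suc c = p then Y c * T p j else 0)" by (rule sum.swap)
    also have "\<dots> = (\<Sum>c<m. Y c * T (Suc c) j)"
      by (intro sum.cong refl) (auto simp: Q_def sum.delta)
    finally show ?thesis unfolding E_def .
  qed
  have "D * (\<Sum>q\<in>Q. \<Sum>p\<in>Q. T i q * Binv q p * T p j) = (\<Sum>q\<in>Q. \<Sum>p\<in>Q. (D * T i q) * Binv q p * T p j)"
    by (simp add: sum_distrib_left mult.assoc)
  also have "\<dots> = (\<Sum>q\<in>Q. \<Sum>p\<in>Q. - (E q * Binv q p * T p j))"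
    by (intro sum.cong refl) (simp add: A)
  also have "\<dots> = - E j" using C by (simp add: sum_negf)
  finally have "D * (\<Sum>q\<in>Q. \<Sum>p\<in>Q. T i q * Binv q p * T p j) = - E j" .
  then show ?thesis unfolding Q_def E_def by (simp add: right_diff_distrib)
qed


declare upt_Suc[simp del]

theorem proposition3p9:
  fixes g :: gtype and n m i j :: nat
    and t :: "nat \<Rightarrow> nat \<Rightarrow> nat \<Rightarrow> 'a::real_algebra_1"
  assumes "n \<ge> 1"
    and "1 \<le> m"
    and "if g = TB then m \<le> n else m \<le> n - 1"
    and "RTT g n t"
    and "m + 1 \<le> i" and "i \<le> pr (Ndim g n) (m + 1)"
    and "m + 1 \<le> j" and "j \<le> pr (Ndim g n) (m + 1)"
  shows "mat_invertible_on {1..m} {1..m} (Tser t)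
    \<and> invertible_el (qminor t [1..<m+1] [1..<m+1] (int m))
    \<and> quasidet ({1..m} \<union> {i}) ({1..m} \<union> {j}) (Tser t) i j
       = rinv (qminor t [1..<m+1] [1..<m+1] (int m))
         * qminor t ([1..<m+1] @ [i]) ([1..<m+1] @ [j]) (int m)"
proof -
  let ?N = "Ndim g n"
  note rtt = assms(4)
  have hN: "2*m + 1 \<le> ?N" using assms(1-3) by (cases "g = TB") (auto simp: Ndim_def)
  have prm: "pr ?N (m+1) = ?N - m" by (simp add: pr_def)
  have iR: "m+1 \<le> i" "i \<le> ?N - m" using assms(5,6) prm by auto
  have jR: "m+1 \<le> j" "j \<le> ?N - m" using assms(7,8) prm by auto
  define R where "R = [1..<m+1] @ [i]"
  define C where "C b = [1..<m+1] @ [b]" for b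
  have Rn: "R ! x = Suc x" if "x < m" for x using that by (simp add: R_def nth_append del: upt_Suc)
  have Rm: "R ! m = i" by (simp add: R_def nth_append del: upt_Suc)
  have lR: "length R = Suc m" by (simp add: R_def del: upt_Suc)
  have Cn: "C b ! x = Suc x" if "x < m" for x b using that by (simp add: C_def nth_append del: upt_Suc)
  have Cm: "C b ! m = b" for b by (simp add: C_def nth_append del: upt_Suc)
  have lC: "length (C b) = Suc m" for b by (simp add: C_def del: upt_Suc)
  define T where "T = Tser t"
  define Y where "Y q = Ycof t (nth R) Suc m (int m) q" for q
  have expand: "qminor t R (C b) (int m) = (\<Sum>q<m. Y q * T (Suc q) b) + Y m * T i b" for b
  proof -
    have "qminor t R (C b) (int m) = gmin t (nth R) (nth (C b)) (Suc m) (int m)"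
      unfolding qminor_gmin lC ..
    also have "\<dots> = (\<Sum>q\<in>{0..<Suc m}. Ycof t (nth R) (nth (C b)) m (int m) q * shiftu (int m - int m) (Tser t (R ! q) (C b ! m)))"
      by (rule gmin_expand)
    also have "\<dots> = (\<Sum>q\<in>{0..<Suc m}. Y q * T (R ! q) b)"
    proof (rule sum.cong[OF refl])
      fix q
      have "Ycof t (nth R) (nth (C b)) m (int m) q = Y q" unfolding Y_def
        by (rule Ycof_cong) (simp add: Cn)
      then show "Ycof t (nth R) (nth (C b)) m (int m) q * shiftu (int m - int m) (Tser t (R ! q) (C b ! m)) = Y q * T (R ! q) b"
        by (simp add: shiftu_zero Cm T_def)
    qed
    also have "\<dots> = (\<Sum>q\<in>{0..<m}. Y q * T (R ! q) b) + Y m * T i b"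
      by (simp add: Rm)
    also have "(\<Sum>q\<in>{0..<m}. Y q * T (R ! q) b) = (\<Sum>q<m. Y q * T (Suc q) b)"
      by (simp add: atLeast0LessThan Rn)
    finally show ?thesis .
  qed
  define D where "D = qminor t [1..<m+1] [1..<m+1] (int m)"
  have DY: "D = Y m"
  proof -
    have "D = gmin t (nth [1..<m+1]) (nth [1..<m+1]) m (int m)" unfolding D_def qminor_gmin by simp
    also have "\<dots> = gmin t (nth R) Suc m (int m)"
      by (rule gmin_cong) (simp_all add: Rn)
    also have "\<dots> = Y m" unfolding Y_def by (rule Ycof_last[symmetric])
    finally show ?thesis .
  qed
  have D0: "D $ 0 = 1"
    unfolding D_def qminor_gmin by (rule gmin_nth0) auto
  have invD: "invertible_el D" unfolding invertible_el_def using fps_inv_ex[OF D0] .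
  have matinv: "mat_invertible_on {1..m} {1..m} (Tser t)"
    by (rule mat_inv_ex) (simp_all add: Tser_nth tc_def idm_def)
  have sc: "symcond t ((nth R) ` {0..<Suc m}) {1..m}"
  proof (rule symcond_rtt[OF rtt])
    have sub: "(nth R) ` {0..<Suc m} \<subseteq> {1..m} \<union> {i}"
    proof
      fix x assume "x \<in> (nth R) ` {0..<Suc m}"
      then obtain q where q: "q < Suc m" "x = R ! q" by auto
      then show "x \<in> {1..m} \<union> {i}" by (cases "q = m") (auto simp: Rm Rn)
    qed
    show "(nth R) ` {0..<Suc m} \<subseteq> {1..?N}" using sub iR hN by auto
    show "{1..m} \<subseteq> {1..?N}" using hN by auto
    show "y \<noteq> pr ?N x" if "x \<in> (nth R) ` {0..<Suc m}" "y \<in> (nth R) ` {0..<Suc m}" "x \<noteq> y" for x y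
    proof -
      have hx: "x \<in> {1..m} \<union> {i}" "y \<in> {1..m} \<union> {i}" using sub that(1,2) by auto
      then show ?thesis using that(3) iR hN unfolding pr_def by auto
    qed
    show "y \<noteq> pr ?N x" if "x \<in> {1..m}" "y \<in> {1..m}" for x y
      using that hN by (auto simp: pr_def)
  qed
  have van: "(\<Sum>q<m. Y q * T (Suc q) l) + D * T i l = 0" if l: "l \<in> {1..m}" for l
  proof -
    have "qminor t R (C l) (int m) = gmin t (nth R) (nth (C l)) (Suc m) (int m)"
      unfolding qminor_gmin lC ..
    also have "\<dots> = 0"
    proof (rule gmin_dup[OF sc])
      show "\<forall>q<Suc m. C l ! q \<in> {1..m}"
      proof (intro allI impI)
        fix q assume "q < Suc m" then show "C l ! q \<in> {1..m}" using l by (cases "q = m") (auto simp: Cm Cn)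
      qed
      show "l - 1 < m" using l by auto
      show "m < Suc m" by simp
      have "l - 1 < m" using l by auto
      then have "C l ! (l - 1) = Suc (l - 1)" by (rule Cn)
      then show "C l ! (l - 1) = C l ! m" using l by (simp add: Cm)
    qed
    finally show ?thesis unfolding expand DY by simp
  qed
  have fin: "finite {1..m::nat}" by simp
  define Binv where "Binv = mat_inv_on {1..m} {1..m} T"
  have Bi: "is_mat_inv_on {1..m} {1..m} T Binv"
    unfolding Binv_def T_def by (rule mat_inv_on_prop[OF fin fin matinv])
  have inv: "(\<Sum>q\<in>{1..m}. T p q * Binv q p') = (if p = p' then 1 else 0)" if "p \<in> {1..m}" "p' \<in> {1..m}" for p p'
    using Bi that unfolding is_mat_inv_on_def by blast
  have seti: "({1..m} \<union> {i}) - {i} = {1..m}" using iR by auto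
  have setj: "({1..m} \<union> {j}) - {j} = {1..m}" using jR by auto
  have qd: "quasidet ({1..m} \<union> {i}) ({1..m} \<union> {j}) (Tser t) i j
      = T i j - (\<Sum>q\<in>{1..m}. \<Sum>p\<in>{1..m}. T i q * Binv q p * T p j)"
    unfolding quasidet_def seti setj Binv_def T_def ..
  have main: "D * quasidet ({1..m} \<union> {i}) ({1..m} \<union> {j}) (Tser t) i j = qminor t R (C j) (int m)"
    unfolding qd expand DY[symmetric]
    by (rule final_alg[where Binv=Binv, OF inv van])
  have rD: "rinv D * D = 1" using rinv_prop[OF invD] by simp
  have "rinv D * qminor t R (C j) (int m) = quasidet ({1..m} \<union> {i}) ({1..m} \<union> {j}) (Tser t) i j"
    unfolding main[symmetric] by (simp add: mult.assoc[symmetric] rD)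
  then show ?thesis using matinv invD unfolding D_def R_def C_def by simp
qed


end
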